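(* Let $n\in\mathbb{N}$ and $M\models\mathrm{I}\Delta_0+\exp$. If there is a proper end extension $K$ of $M$ with $M\preccurlyeq_{\Sigma_{n+2}}K$ and $K\models M\text{-}\mathrm{I}\Sigma_{n+1}$, then $M\models\mathrm{WR}(\Sigma_{n+1}\wedge\Pi_{n+1})$.
   Context: $M\preccurlyeq_{\Sigma_k}K$: every $\Sigma_k$ formula with parameters from $M$ has the same truth value in $M$ and $K$; end extension: every element of $K\setminus M$ exceeds every element of $M$; proper: $K\neq M$. For an end extension $M\subseteq K$ of models of $\mathrm{I}\Delta_0+\exp$, $K\models M\text{-}\mathrm{I}\Sigma_{n+1}$ means: for every $\Sigma_{n+1}$ formula $\phi(x)$ with parameters from $K$ and every $a\in M$, $K\models\phi(0)\wedge\forall x<a(\phi(x)\to\phi(x+1))\to\forall x<a\,\phi(x)$. $\Sigma_{k}\wedge\Pi_{k}$ is the class of conjunctions of a $\Sigma_k$ and a $\Pi_k$ formula. For a formula $\phi(x,y)$ (possibly with further free variables), $\mathrm{WR}\phi$ is the universal closure of $\forall x\,\exists y<a\,\phi(x,y)\to\exists y<a\,\forall b\,\exists x>b\,\phi(x,y)$, and $\mathrm{WR}\Gamma=\mathrm{I}\Delta_0\cup\{\mathrm{WR}\phi:\phi\in\Gamma\}$. *)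

theory Defs
  imports Main
begin

section \<open>First-order language of arithmetic {0,1,+,*,<} with de Bruijn variables\<close>

datatype trm = Var nat | Zero | One | Plus trm trm | Times trm trm

text \<open>BEx t f : exists x < t. f ; BAll t f : forall x < t. f.
  The bound t is interpreted in the outer environment; the bound variable is index 0 in f.\<close>
datatype fm =
    Eq trm trm | Lt trm trm
  | Neg fm | Conj fm fm | Disj fm fm
  | Ex fm | All fm
  | BEx trm fm | BAll trm fm

record 'a struc =
  univ :: "'a set"
  zer :: 'a
  one :: 'a
  pl  :: "'a \<Rightarrow> 'a \<Rightarrow> 'a"
  tm  :: "'a \<Rightarrow> 'a \<Rightarrow> 'a"
  ls  :: "'a \<Rightarrow> 'a \<Rightarrow> bool"

definition cons_env :: "'a \<Rightarrow> (nat \<Rightarrow> 'a) \<Rightarrow> nat \<Rightarrow> 'a" (infixr "##" 65) where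
  "x ## e = case_nat x e"

fun evt :: "'a struc \<Rightarrow> (nat \<Rightarrow> 'a) \<Rightarrow> trm \<Rightarrow> 'a" where
  "evt S e (Var i) = e i"
| "evt S e Zero = zer S"
| "evt S e One = one S"
| "evt S e (Plus s t) = pl S (evt S e s) (evt S e t)"
| "evt S e (Times s t) = tm S (evt S e s) (evt S e t)"

fun sat :: "'a struc \<Rightarrow> (nat \<Rightarrow> 'a) \<Rightarrow> fm \<Rightarrow> bool" where
  "sat S e (Eq s t) = (evt S e s = evt S e t)"
| "sat S e (Lt s t) = ls S (evt S e s) (evt S e t)"
| "sat S e (Neg f) = (\<not> sat S e f)"
| "sat S e (Conj f g) = (sat S e f \<and> sat S e g)"
| "sat S e (Disj f g) = (sat S e f \<or> sat S e g)"
| "sat S e (Ex f) = (\<exists>x\<in>univ S. sat S (x ## e) f)"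
| "sat S e (All f) = (\<forall>x\<in>univ S. sat S (x ## e) f)"
| "sat S e (BEx t f) = (\<exists>x\<in>univ S. ls S x (evt S e t) \<and> sat S (x ## e) f)"
| "sat S e (BAll t f) = (\<forall>x\<in>univ S. ls S x (evt S e t) \<longrightarrow> sat S (x ## e) f)"

definition env :: "'a struc \<Rightarrow> (nat \<Rightarrow> 'a) \<Rightarrow> bool" where
  "env S e \<longleftrightarrow> range e \<subseteq> univ S"

fun delta0 :: "fm \<Rightarrow> bool" where
  "delta0 (Eq s t) = True"
| "delta0 (Lt s t) = True"
| "delta0 (Neg f) = delta0 f"
| "delta0 (Conj f g) = (delta0 f \<and> delta0 g)"
| "delta0 (Disj f g) = (delta0 f \<and> delta0 g)"
| "delta0 (Ex f) = False"
| "delta0 (All f) = False"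
| "delta0 (BEx t f) = delta0 f"
| "delta0 (BAll t f) = delta0 f"

inductive sigma :: "nat \<Rightarrow> fm \<Rightarrow> bool" and pi :: "nat \<Rightarrow> fm \<Rightarrow> bool" where
  s0: "delta0 f \<Longrightarrow> sigma 0 f"
| p0: "delta0 f \<Longrightarrow> pi 0 f"
| sS: "pi k f \<Longrightarrow> sigma (Suc k) f"
| sEx: "sigma (Suc k) f \<Longrightarrow> sigma (Suc k) (Ex f)"
| pS: "sigma k f \<Longrightarrow> pi (Suc k) f"
| pAll: "pi (Suc k) f \<Longrightarrow> pi (Suc k) (All f)"

definition sigma_and_pi :: "nat \<Rightarrow> fm \<Rightarrow> bool" where
  "sigma_and_pi k h \<longleftrightarrow> (\<exists>f g. h = Conj f g \<and> sigma k f \<and> pi k g)"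

definition wf_struc :: "'a struc \<Rightarrow> bool" where
  "wf_struc S \<longleftrightarrow> zer S \<in> univ S \<and> one S \<in> univ S \<and>
     (\<forall>x\<in>univ S. \<forall>y\<in>univ S. pl S x y \<in> univ S \<and> tm S x y \<in> univ S)"

text \<open>PA^- (axioms of the non-negative parts of discretely ordered rings), Kaye.\<close>
definition PA_minus :: "'a struc \<Rightarrow> bool" where
  "PA_minus S \<longleftrightarrow> wf_struc S \<and>
   (let U = univ S; p = pl S; t = tm S; l = ls S; z = zer S; u = one S in
   (\<forall>x\<in>U. \<forall>y\<in>U. \<forall>w\<in>U. p (p x y) w = p x (p y w) \<and> t (t x y) w = t x (t y w)
       \<and> t x (p y w) = p (t x y) (t x w)) \<and>
   (\<forall>x\<in>U. \<forall>y\<in>U. p x y = p y x \<and> t x y = t y x) \<and>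
   (\<forall>x\<in>U. p x z = x \<and> t x z = z \<and> t x u = x) \<and>
   (\<forall>x\<in>U. \<forall>y\<in>U. \<forall>w\<in>U. l x y \<and> l y w \<longrightarrow> l x w) \<and>
   (\<forall>x\<in>U. \<not> l x x) \<and>
   (\<forall>x\<in>U. \<forall>y\<in>U. l x y \<or> x = y \<or> l y x) \<and>
   (\<forall>x\<in>U. \<forall>y\<in>U. \<forall>w\<in>U. l x y \<longrightarrow> l (p x w) (p y w)) \<and>
   (\<forall>x\<in>U. \<forall>y\<in>U. \<forall>w\<in>U. l z w \<and> l x y \<longrightarrow> l (t x w) (t y w)) \<and>
   (\<forall>x\<in>U. \<forall>y\<in>U. l x y \<longrightarrow> (\<exists>w\<in>U. p x w = y)) \<and>
   l z u \<and>
   (\<forall>x\<in>U. l z x \<longrightarrow> (u = x \<or> l u x)) \<and>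
   (\<forall>x\<in>U. z = x \<or> l z x))"

text \<open>Induction for Delta_0 formulas with parameters; variable 0 is the induction variable.\<close>
definition IDelta0 :: "'a struc \<Rightarrow> bool" where
  "IDelta0 S \<longleftrightarrow> PA_minus S \<and>
    (\<forall>f e. delta0 f \<longrightarrow> env S e \<longrightarrow>
       sat S (zer S ## e) f \<and> (\<forall>x\<in>univ S. sat S (x ## e) f \<longrightarrow> sat S (pl S x (one S) ## e) f)
       \<longrightarrow> (\<forall>x\<in>univ S. sat S (x ## e) f))"

text \<open>The axiom exp: totality of (a Delta_0 definition of) the graph of x \<mapsto> 2^x.
  Over IDelta0 this is equivalent to the usual axiom.\<close>
definition exp_ax :: "'a struc \<Rightarrow> bool" where
  "exp_ax S \<longleftrightarrow> (\<exists>E. delta0 E \<and>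
     (\<forall>e. env S e \<longrightarrow>
        sat S (zer S ## one S ## e) E \<and>
        (\<forall>x\<in>univ S. \<forall>y\<in>univ S. sat S (x ## y ## e) E \<longrightarrow> sat S (pl S x (one S) ## pl S y y ## e) E) \<and>
        (\<forall>x\<in>univ S. \<forall>y\<in>univ S. \<forall>y'\<in>univ S. sat S (x ## y ## e) E \<and> sat S (x ## y' ## e) E \<longrightarrow> y = y') \<and>
        (\<forall>x\<in>univ S. \<exists>y\<in>univ S. sat S (x ## y ## e) E)))"

definition IDelta0_exp :: "'a struc \<Rightarrow> bool" where
  "IDelta0_exp S \<longleftrightarrow> IDelta0 S \<and> exp_ax S"

definition end_extension :: "'a struc \<Rightarrow> 'a struc \<Rightarrow> bool" where
  "end_extension M K \<longleftrightarrow> univ M \<subseteq> univ K \<and> zer M = zer K \<and> one M = one K \<and>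
     (\<forall>x\<in>univ M. \<forall>y\<in>univ M. pl M x y = pl K x y \<and> tm M x y = tm K x y \<and> (ls M x y \<longleftrightarrow> ls K x y)) \<and>
     (\<forall>x\<in>univ K - univ M. \<forall>y\<in>univ M. ls K y x)"

definition sigma_elementary :: "nat \<Rightarrow> 'a struc \<Rightarrow> 'a struc \<Rightarrow> bool" where
  "sigma_elementary k M K \<longleftrightarrow> (\<forall>f e. sigma k f \<longrightarrow> env M e \<longrightarrow> (sat M e f \<longleftrightarrow> sat K e f))"

text \<open>K |= M-I Sigma_k: induction up to elements a of M for Sigma_k formulas with parameters from K.\<close>
definition M_induction :: "nat \<Rightarrow> 'a struc \<Rightarrow> 'a struc \<Rightarrow> bool" where
  "M_induction k M K \<longleftrightarrow> (\<forall>f e a. sigma k f \<longrightarrow> env K e \<longrightarrow> a \<in> univ M \<longrightarrow>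
     sat K (zer K ## e) f \<and> (\<forall>x\<in>univ K. ls K x a \<longrightarrow> sat K (x ## e) f \<longrightarrow> sat K (pl K x (one K) ## e) f)
     \<longrightarrow> (\<forall>x\<in>univ K. ls K x a \<longrightarrow> sat K (x ## e) f))"

text \<open>WR f, for f(x,y,params) with x = var 0, y = var 1, params = remaining variables;
  universal closure over a and the parameters.\<close>
definition WR_holds :: "'a struc \<Rightarrow> fm \<Rightarrow> bool" where
  "WR_holds S f \<longleftrightarrow> (\<forall>e a. env S e \<longrightarrow> a \<in> univ S \<longrightarrow>
     (\<forall>x\<in>univ S. \<exists>y\<in>univ S. ls S y a \<and> sat S (x ## y ## e) f) \<longrightarrow>
     (\<exists>y\<in>univ S. ls S y a \<and> (\<forall>b\<in>univ S. \<exists>x\<in>univ S. ls S b x \<and> sat S (x ## y ## e) f)))"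

definition models_WR :: "'a struc \<Rightarrow> (fm \<Rightarrow> bool) \<Rightarrow> bool" where
  "models_WR S \<Gamma> \<longleftrightarrow> IDelta0 S \<and> (\<forall>f. \<Gamma> f \<longrightarrow> WR_holds S f)"

end

theory Submission
  imports Defs
begin


lemma cons_env_0[simp]: "(x ## e) 0 = x" and cons_env_Suc[simp]: "(x ## e) (Suc i) = e i"
  by (simp_all add: cons_env_def)

fun rent :: "(nat \<Rightarrow> nat) \<Rightarrow> trm \<Rightarrow> trm" where
  "rent r (Var i) = Var (r i)"
| "rent r Zero = Zero"
| "rent r One = One"
| "rent r (Plus s t) = Plus (rent r s) (rent r t)"
| "rent r (Times s t) = Times (rent r s) (rent r t)"

definition shf :: "(nat \<Rightarrow> nat) \<Rightarrow> nat \<Rightarrow> nat" where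
  "shf r = case_nat 0 (\<lambda>i. Suc (r i))"

lemma shf_simps[simp]: "shf r 0 = 0" "shf r (Suc i) = Suc (r i)"
  by (simp_all add: shf_def)

fun ren :: "(nat \<Rightarrow> nat) \<Rightarrow> fm \<Rightarrow> fm" where
  "ren r (Eq s t) = Eq (rent r s) (rent r t)"
| "ren r (Lt s t) = Lt (rent r s) (rent r t)"
| "ren r (Neg f) = Neg (ren r f)"
| "ren r (Conj f g) = Conj (ren r f) (ren r g)"
| "ren r (Disj f g) = Disj (ren r f) (ren r g)"
| "ren r (Ex f) = Ex (ren (shf r) f)"
| "ren r (All f) = All (ren (shf r) f)"
| "ren r (BEx t f) = BEx (rent r t) (ren (shf r) f)"
| "ren r (BAll t f) = BAll (rent r t) (ren (shf r) f)"

lemma evt_rent[simp]: "evt S e (rent r t) = evt S (e \<circ> r) t"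
  by (induct t) auto

lemma comp_shf: "(x ## e) \<circ> shf r = x ## (e \<circ> r)"
  by (rule ext) (simp add: cons_env_def shf_def split: nat.split)

lemma sat_ren[simp]: "sat S e (ren r f) = sat S (e \<circ> r) f"
  by (induct f arbitrary: e r) (auto simp: comp_shf)

lemma size_ren[simp]: "size (ren r f) = size f"
  by (induct f arbitrary: r) auto

lemma delta0_ren[simp]: "delta0 (ren r f) = delta0 f"
  by (induct f arbitrary: r) auto

abbreviation lift :: "fm \<Rightarrow> fm" where "lift \<equiv> ren Suc"

lemma comp_Suc_cons[simp]: "(x ## e) \<circ> Suc = e"
  by (rule ext) simp

lemma ren_isEx: "(\<exists>g. ren r f = Ex g) \<longleftrightarrow> (\<exists>g. f = Ex g)"
  by (cases f) auto
lemma ren_isAll: "(\<exists>g. ren r f = All g) \<longleftrightarrow> (\<exists>g. f = All g)"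
  by (cases f) auto

lemma sigma_pi_ren:
  "sigma k f \<Longrightarrow> sigma k (ren r f)" "pi k f \<Longrightarrow> pi k (ren r f)"
proof (induct arbitrary: r and r rule: sigma_pi.inducts)
qed (auto intro: sigma_pi.intros)

lemma sigma_pi_mono:
  "sigma k f \<Longrightarrow> sigma (Suc k) f" "pi k f \<Longrightarrow> pi (Suc k) f"
proof (induct rule: sigma_pi.inducts)
qed (auto intro: sigma_pi.intros)

lemma delta0_sp: "delta0 f \<Longrightarrow> sigma k f \<and> pi k f"
  by (induct k) (auto intro: sigma_pi.intros)
lemma delta0_sigma: "delta0 f \<Longrightarrow> sigma k f" and delta0_pi: "delta0 f \<Longrightarrow> pi k f"
  using delta0_sp by auto


lemma sigma_Ex_inv: "sigma k f \<Longrightarrow> f = Ex g \<Longrightarrow> sigma k g \<and> 0 < k"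
  and pi_Ex_inv: "pi k f \<Longrightarrow> f = Ex g \<Longrightarrow> sigma k g \<and> 0 < k"
proof (induct arbitrary: g and g rule: sigma_pi.inducts)
qed (auto intro: sigma_pi_mono)

lemma sigma_All_inv: "sigma k f \<Longrightarrow> f = All g \<Longrightarrow> pi k g \<and> 0 < k"
  and pi_All_inv: "pi k f \<Longrightarrow> f = All g \<Longrightarrow> pi k g \<and> 0 < k"
proof (induct arbitrary: g and g rule: sigma_pi.inducts)
qed (auto intro: sigma_pi_mono)

lemma sp_noq_delta0: "sigma k f \<Longrightarrow> (\<forall>g. f \<noteq> Ex g) \<Longrightarrow> (\<forall>g. f \<noteq> All g) \<Longrightarrow> delta0 f"
  and sp_noq_delta0': "pi k f \<Longrightarrow> (\<forall>g. f \<noteq> Ex g) \<Longrightarrow> (\<forall>g. f \<noteq> All g) \<Longrightarrow> delta0 f"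
proof (induct rule: sigma_pi.inducts)
qed auto

lemma pi_noq_delta0: "pi k f \<Longrightarrow> (\<forall>g. f \<noteq> Ex g) \<Longrightarrow> (\<forall>g. f \<noteq> All g) \<Longrightarrow> delta0 f"
  using sp_noq_delta0' by blast

lemma sigma_Suc_noEx: "sigma (Suc k) f \<Longrightarrow> (\<forall>g. f \<noteq> Ex g) \<Longrightarrow> pi k f"
  by (erule sigma.cases) auto

lemma pi_Suc_noAll: "pi (Suc k) f \<Longrightarrow> (\<forall>g. f \<noteq> All g) \<Longrightarrow> sigma k f"
  by (erule pi.cases) auto

lemma sigma_0: "sigma 0 f \<Longrightarrow> delta0 f"
  by (erule sigma.cases) auto
lemma pi_0: "pi 0 f \<Longrightarrow> delta0 f"
  by (erule pi.cases) auto

fun dual :: "fm \<Rightarrow> fm" where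
  "dual (Ex f) = All (dual f)"
| "dual (All f) = Ex (dual f)"
| "dual f = Neg f"

lemma sat_dual[simp]: "sat S e (dual f) = (\<not> sat S e f)"
  by (induct f arbitrary: e rule: dual.induct) auto

lemma dual_sp: "sigma k f \<Longrightarrow> pi k (dual f)" "pi k f \<Longrightarrow> sigma k (dual f)"
proof (induct rule: sigma_pi.inducts)
  case (s0 f) then show ?case by (cases f) (auto intro: sigma_pi.intros)
next
  case (p0 f) then show ?case by (cases f) (auto intro: sigma_pi.intros)
qed (auto intro: sigma_pi.intros)


fun isEx :: "fm \<Rightarrow> bool" where "isEx (Ex f) = True" | "isEx f = False"
fun isAll :: "fm \<Rightarrow> bool" where "isAll (All f) = True" | "isAll f = False"
fun unq :: "fm \<Rightarrow> fm" where "unq (Ex f) = f" | "unq (All f) = f" | "unq f = f"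

lemma isEx_iff: "isEx f \<longleftrightarrow> (\<exists>g. f = Ex g)" by (cases f) auto
lemma isAll_iff: "isAll f \<longleftrightarrow> (\<exists>g. f = All g)" by (cases f) auto

lemma size_unq: "isEx f \<or> isAll f \<Longrightarrow> size (unq f) < size f"
  by (cases f) auto

function cj :: "bool \<Rightarrow> fm \<Rightarrow> fm \<Rightarrow> fm" where
  "cj m a b = (if m then
     (if isEx a then Ex (cj True (unq a) (lift b))
      else if isEx b then Ex (cj True (lift a) (unq b))
      else if isAll a then All (cj False (unq a) (lift b))
      else if isAll b then All (cj False (lift a) (unq b))
      else Conj a b)
   else
     (if isAll a then All (cj False (unq a) (lift b))
      else if isAll b then All (cj False (lift a) (unq b))
      else if isEx a then Ex (cj True (unq a) (lift b))
      else if isEx b then Ex (cj True (lift a) (unq b))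
      else Conj a b))"
  by pat_completeness auto
termination by (relation "measure (\<lambda>(m,a,b). size a + size b)") (auto intro: size_unq)

declare cj.simps[simp del]

lemma sat_cj: "univ S \<noteq> {} \<Longrightarrow> sat S e (cj m a b) = (sat S e a \<and> sat S e b)"
proof (induct m a b arbitrary: e rule: cj.induct)
  case (1 m a b)
  show ?case
    apply (subst cj.simps)
    using 1 by (auto simp: isEx_iff isAll_iff)
qed

lemma cj_eqs:
  "cj True (Ex a) b = Ex (cj True a (lift b))"
  "\<not> isEx a \<Longrightarrow> cj True a (Ex b) = Ex (cj True (lift a) b)"
  "\<not> isEx b \<Longrightarrow> cj True (All a) b = All (cj False a (lift b))"
  "\<not> isEx a \<Longrightarrow> \<not> isAll a \<Longrightarrow> cj True a (All b) = All (cj False (lift a) b)"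
  "\<not> isEx a \<Longrightarrow> \<not> isAll a \<Longrightarrow> \<not> isEx b \<Longrightarrow> \<not> isAll b \<Longrightarrow> cj True a b = Conj a b"
  "cj False (All a) b = All (cj False a (lift b))"
  "\<not> isAll a \<Longrightarrow> cj False a (All b) = All (cj False (lift a) b)"
  "\<not> isAll b \<Longrightarrow> cj False (Ex a) b = Ex (cj True a (lift b))"
  "\<not> isEx a \<Longrightarrow> \<not> isAll a \<Longrightarrow> cj False a (Ex b) = Ex (cj True (lift a) b)"
  "\<not> isEx a \<Longrightarrow> \<not> isAll a \<Longrightarrow> \<not> isEx b \<Longrightarrow> \<not> isAll b \<Longrightarrow> cj False a b = Conj a b"
  by (subst cj.simps; simp)+

lemma Suc_of_pos: "0 < (k::nat) \<Longrightarrow> (\<And>k'. k = Suc k' \<Longrightarrow> P) \<Longrightarrow> P"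
  by (cases k) auto

lemma cj_sp: "(m \<longrightarrow> sigma k a \<longrightarrow> sigma k b \<longrightarrow> sigma k (cj m a b)) \<and>
              (\<not> m \<longrightarrow> pi k a \<longrightarrow> pi k b \<longrightarrow> pi k (cj m a b))"
proof (induct m a b arbitrary: k rule: cj.induct)
  case (1 m a b)
  note IH = 1
  show ?case
  proof (intro conjI impI)
    assume m: m and sa: "sigma k a" and sb: "sigma k b"
    show "sigma k (cj m a b)"
    proof (cases "isEx a")
      case True
      then obtain a' where a: "a = Ex a'" by (auto simp: isEx_iff)
      have sa': "sigma k a'" and k0: "0 < k" using sigma_Ex_inv[OF sa a] by auto
      obtain k' where k: "k = Suc k'" using Suc_of_pos[OF k0] by blast
      have "sigma k (lift b)" using sb by (rule sigma_pi_ren)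
      then have "sigma k (cj True a' (lift b))" using IH(1) m True a sa' by simp
      then show ?thesis using m a k cj_eqs(1) sigma_pi.sEx by simp
    next
      case nEa: False
      show ?thesis
      proof (cases "isEx b")
        case True
        then obtain b' where b: "b = Ex b'" by (auto simp: isEx_iff)
        have sb': "sigma k b'" and k0: "0 < k" using sigma_Ex_inv[OF sb b] by auto
        obtain k' where k: "k = Suc k'" using Suc_of_pos[OF k0] by blast
        have "sigma k (lift a)" using sa by (rule sigma_pi_ren)
        then have "sigma k (cj True (lift a) b')" using IH(2) m True nEa b sb' by simp
        then show ?thesis using m b k nEa cj_eqs(2) sigma_pi.sEx by simp
      next
        case nEb: False
        show ?thesis
        proof (cases "isAll a")
          case True
          then obtain a' where a: "a = All a'" by (auto simp: isAll_iff)
          have k0: "0 < k" using sigma_All_inv[OF sa a] by auto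
          obtain k' where k: "k = Suc k'" using Suc_of_pos[OF k0] by blast
          have pa: "pi k' (All a')" using sa a k sigma_Suc_noEx by auto
          have pa': "pi k' a'" and k0': "0 < k'" using pi_All_inv[OF pa refl] by auto
          obtain k'' where k': "k' = Suc k''" using Suc_of_pos[OF k0'] by blast
          have "pi k' b" using sb k nEb sigma_Suc_noEx by (auto simp: isEx_iff)
          then have "pi k' (lift b)" by (rule sigma_pi_ren)
          then have "pi k' (cj False a' (lift b))" using IH(3) m True nEa nEb a pa' by simp
          then have "pi k' (All (cj False a' (lift b)))" using k' sigma_pi.pAll by simp
          then show ?thesis using m a k nEb cj_eqs(3) sigma_pi.sS by simp
        next
          case nAa: False
          show ?thesis
          proof (cases "isAll b")
            case True
            then obtain b' where b: "b = All b'" by (auto simp: isAll_iff)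
            have k0: "0 < k" using sigma_All_inv[OF sb b] by auto
            obtain k' where k: "k = Suc k'" using Suc_of_pos[OF k0] by blast
            have pb: "pi k' (All b')" using sb b k sigma_Suc_noEx by auto
            have pb': "pi k' b'" and k0': "0 < k'" using pi_All_inv[OF pb refl] by auto
            obtain k'' where k': "k' = Suc k''" using Suc_of_pos[OF k0'] by blast
            have "pi k' a" using sa k nEa sigma_Suc_noEx by (auto simp: isEx_iff)
            then have "pi k' (lift a)" by (rule sigma_pi_ren)
            then have "pi k' (cj False (lift a) b')" using IH(4) m True nEa nEb nAa b pb' by simp
            then have "pi k' (All (cj False (lift a) b'))" using k' sigma_pi.pAll by simp
            then show ?thesis using m b k nEa nAa cj_eqs(4) sigma_pi.sS by simp
          next
            case False
            have "delta0 a" "delta0 b" using sa sb nEa nEb nAa False sp_noq_delta0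
              by (auto simp: isEx_iff isAll_iff)
            then show ?thesis using m nEa nEb nAa False cj_eqs(5) delta0_sigma by simp
          qed
        qed
      qed
    qed
  next
    assume m: "\<not> m" and sa: "pi k a" and sb: "pi k b"
    show "pi k (cj m a b)"
    proof (cases "isAll a")
      case True
      then obtain a' where a: "a = All a'" by (auto simp: isAll_iff)
      have sa': "pi k a'" and k0: "0 < k" using pi_All_inv[OF sa a] by auto
      obtain k' where k: "k = Suc k'" using Suc_of_pos[OF k0] by blast
      have "pi k (lift b)" using sb by (rule sigma_pi_ren)
      then have "pi k (cj False a' (lift b))" using IH(5) m True a sa' by simp
      then show ?thesis using m a k cj_eqs(6) sigma_pi.pAll by simp
    next
      case nAa: False
      show ?thesis
      proof (cases "isAll b")
        case True
        then obtain b' where b: "b = All b'" by (auto simp: isAll_iff)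
        have sb': "pi k b'" and k0: "0 < k" using pi_All_inv[OF sb b] by auto
        obtain k' where k: "k = Suc k'" using Suc_of_pos[OF k0] by blast
        have "pi k (lift a)" using sa by (rule sigma_pi_ren)
        then have "pi k (cj False (lift a) b')" using IH(6) m True nAa b sb' by simp
        then show ?thesis using m b k nAa cj_eqs(7) sigma_pi.pAll by simp
      next
        case nAb: False
        show ?thesis
        proof (cases "isEx a")
          case True
          then obtain a' where a: "a = Ex a'" by (auto simp: isEx_iff)
          have k0: "0 < k" using pi_Ex_inv[OF sa a] by auto
          obtain k' where k: "k = Suc k'" using Suc_of_pos[OF k0] by blast
          have pa: "sigma k' (Ex a')" using sa a k pi_Suc_noAll by auto
          have pa': "sigma k' a'" and k0': "0 < k'" using sigma_Ex_inv[OF pa refl] by auto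
          obtain k'' where k': "k' = Suc k''" using Suc_of_pos[OF k0'] by blast
          have "sigma k' b" using sb k nAb pi_Suc_noAll by (auto simp: isAll_iff)
          then have "sigma k' (lift b)" by (rule sigma_pi_ren)
          then have "sigma k' (cj True a' (lift b))" using IH(7) m True nAa nAb a pa' by simp
          then have "sigma k' (Ex (cj True a' (lift b)))" using k' sigma_pi.sEx by simp
          then show ?thesis using m a k nAb cj_eqs(8) sigma_pi.pS by simp
        next
          case nEa: False
          show ?thesis
          proof (cases "isEx b")
            case True
            then obtain b' where b: "b = Ex b'" by (auto simp: isEx_iff)
            have k0: "0 < k" using pi_Ex_inv[OF sb b] by auto
            obtain k' where k: "k = Suc k'" using Suc_of_pos[OF k0] by blast
            have pb: "sigma k' (Ex b')" using sb b k pi_Suc_noAll by auto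
            have pb': "sigma k' b'" and k0': "0 < k'" using sigma_Ex_inv[OF pb refl] by auto
            obtain k'' where k': "k' = Suc k''" using Suc_of_pos[OF k0'] by blast
            have "sigma k' a" using sa k nAa pi_Suc_noAll by (auto simp: isAll_iff)
            then have "sigma k' (lift a)" by (rule sigma_pi_ren)
            then have "sigma k' (cj True (lift a) b')" using IH(8) m True nAa nAb nEa b pb' by simp
            then have "sigma k' (Ex (cj True (lift a) b'))" using k' sigma_pi.sEx by simp
            then show ?thesis using m b k nEa nAa cj_eqs(9) sigma_pi.pS by simp
          next
            case False
            have "delta0 a" "delta0 b" using sa sb nEa nAb nAa False sp_noq_delta0'
              by (auto simp: isEx_iff isAll_iff)
            then show ?thesis using m nEa nAb nAa False cj_eqs(10) delta0_pi by simp
          qed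
        qed
      qed
    qed
  qed
qed

lemma cj_sigma: "sigma k a \<Longrightarrow> sigma k b \<Longrightarrow> sigma k (cj True a b)"
  and cj_pi: "pi k a \<Longrightarrow> pi k b \<Longrightarrow> pi k (cj False a b)"
  using cj_sp[of True k a b] cj_sp[of False k a b] by simp_all

definition dj :: "bool \<Rightarrow> fm \<Rightarrow> fm \<Rightarrow> fm" where
  "dj m a b = dual (cj (\<not> m) (dual a) (dual b))"

lemma sat_dj: "univ S \<noteq> {} \<Longrightarrow> sat S e (dj m a b) = (sat S e a \<or> sat S e b)"
  by (simp add: dj_def sat_cj)

lemma dj_sigma: "sigma k a \<Longrightarrow> sigma k b \<Longrightarrow> sigma k (dj True a b)"
  and dj_pi: "pi k a \<Longrightarrow> pi k b \<Longrightarrow> pi k (dj False a b)"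
  by (auto simp: dj_def intro!: dual_sp cj_sigma cj_pi)


fun sbt :: "(nat \<Rightarrow> trm) \<Rightarrow> trm \<Rightarrow> trm" where
  "sbt s (Var i) = s i"
| "sbt s Zero = Zero"
| "sbt s One = One"
| "sbt s (Plus a b) = Plus (sbt s a) (sbt s b)"
| "sbt s (Times a b) = Times (sbt s a) (sbt s b)"

definition shs :: "(nat \<Rightarrow> trm) \<Rightarrow> nat \<Rightarrow> trm" where
  "shs s = case_nat (Var 0) (\<lambda>i. rent Suc (s i))"

fun sbst :: "(nat \<Rightarrow> trm) \<Rightarrow> fm \<Rightarrow> fm" where
  "sbst s (Eq a b) = Eq (sbt s a) (sbt s b)"
| "sbst s (Lt a b) = Lt (sbt s a) (sbt s b)"
| "sbst s (Neg f) = Neg (sbst s f)"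
| "sbst s (Conj f g) = Conj (sbst s f) (sbst s g)"
| "sbst s (Disj f g) = Disj (sbst s f) (sbst s g)"
| "sbst s (Ex f) = Ex (sbst (shs s) f)"
| "sbst s (All f) = All (sbst (shs s) f)"
| "sbst s (BEx t f) = BEx (sbt s t) (sbst (shs s) f)"
| "sbst s (BAll t f) = BAll (sbt s t) (sbst (shs s) f)"

lemma evt_sbt[simp]: "evt S e (sbt s t) = evt S (\<lambda>i. evt S e (s i)) t"
  by (induct t) auto

lemma shs_env: "(\<lambda>i. evt S (x ## e) (shs s i)) = x ## (\<lambda>i. evt S e (s i))"
  by (rule ext, case_tac i) (simp_all add: shs_def)

lemma sat_sbst[simp]: "sat S e (sbst s f) = sat S (\<lambda>i. evt S e (s i)) f"
  by (induct f arbitrary: e s) (auto simp: shs_env)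

lemma delta0_sbst[simp]: "delta0 (sbst s f) = delta0 f"
  by (induct f arbitrary: s) auto

fun pre :: "'a list \<Rightarrow> (nat \<Rightarrow> 'a) \<Rightarrow> nat \<Rightarrow> 'a" where
  "pre [] e = e"
| "pre (u # us) e = u ## pre us e"

lemma pre_snoc: "pre (us @ [x]) e = pre us (x ## e)"
  by (induct us) auto

lemma pre_nth: "i < length us \<Longrightarrow> pre us e i = us ! i"
proof (induct us arbitrary: i)
  case (Cons u us) then show ?case by (cases i) auto
qed simp

lemma pre_beyond: "pre us e (length us + i) = e i"
  by (induct us) auto

lemma env_pre: "env S e \<Longrightarrow> set us \<subseteq> univ S \<Longrightarrow> env S (pre us e)"
proof (induct us)
  case (Cons u us) then show ?case
    unfolding env_def image_subset_iff by (auto simp: cons_env_def split: nat.split)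
qed simp

lemma env_cons: "env S e \<Longrightarrow> x \<in> univ S \<Longrightarrow> env S (x ## e)"
  unfolding env_def image_subset_iff by (auto simp: cons_env_def split: nat.split)

fun allB :: "nat \<Rightarrow> fm \<Rightarrow> fm" where
  "allB 0 f = f"
| "allB (Suc m) f = allB m (All f)"

lemma allB_All: "allB m (All f) = All (allB m f)"
  by (induct m arbitrary: f) auto

lemma sat_allB: "sat S e (allB m f) \<longleftrightarrow>
  (\<forall>us. length us = m \<longrightarrow> set us \<subseteq> univ S \<longrightarrow> sat S (pre us e) f)"
proof (induct m arbitrary: f)
  case 0 then show ?case by auto
next
  case (Suc m)
  show ?case
  proof
    assume "sat S e (allB (Suc m) f)"
    then show "\<forall>us. length us = Suc m \<longrightarrow> set us \<subseteq> univ S \<longrightarrow> sat S (pre us e) f"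
      using Suc by (auto simp: length_Suc_conv)
  next
    assume H: "\<forall>us. length us = Suc m \<longrightarrow> set us \<subseteq> univ S \<longrightarrow> sat S (pre us e) f"
    show "sat S e (allB (Suc m) f)" unfolding allB.simps Suc
    proof (intro allI impI)
      fix us assume "length us = m" "set us \<subseteq> univ S"
      then show "sat S (pre us e) (All f)" using H[rule_format, of "_ # us"] by auto
    qed
  qed
qed

lemma pi_decomp_aux: "sigma k1 f1 \<Longrightarrow> True"
  "pi k' f \<Longrightarrow> \<forall>k. k' = Suc k \<longrightarrow> (\<exists>m g. f = allB m g \<and> sigma k g)"
proof (induct rule: sigma_pi.inducts)
  case (pS k f) then show ?case by (metis allB.simps(1) nat.inject)
next
  case (pAll k f) then show ?case by (metis allB.simps(2) allB_All)
qed auto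

lemma pi_decomp: "pi (Suc k) f \<Longrightarrow> \<exists>m g. f = allB m g \<and> sigma k g"
  using pi_decomp_aux(2) by blast

fun bexs :: "nat \<Rightarrow> nat \<Rightarrow> fm \<Rightarrow> fm" where
  "bexs 0 g f = f"
| "bexs (Suc m) g f = BEx (Var g) (bexs m (Suc g) f)"

lemma sat_bexs: "sat S e (bexs m g f) \<longleftrightarrow>
  (\<exists>us. length us = m \<and> set us \<subseteq> univ S \<and> (\<forall>u\<in>set us. ls S u (e g)) \<and> sat S (pre us e) f)"
proof (induct m arbitrary: g e)
  case 0 then show ?case by auto
next
  case (Suc m)
  show ?case
  proof
    assume "sat S e (bexs (Suc m) g f)"
    then obtain x us where "x \<in> univ S" "ls S x (e g)" "length us = m" "set us \<subseteq> univ S"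
       "\<forall>u\<in>set us. ls S u (e g)" "sat S (pre us (x ## e)) f"
      using Suc by auto
    then show "\<exists>us. length us = Suc m \<and> set us \<subseteq> univ S \<and> (\<forall>u\<in>set us. ls S u (e g)) \<and> sat S (pre us e) f"
      by (rule_tac x="us @ [x]" in exI) (auto simp: pre_snoc)
  next
    assume "\<exists>us. length us = Suc m \<and> set us \<subseteq> univ S \<and> (\<forall>u\<in>set us. ls S u (e g)) \<and> sat S (pre us e) f"
    then obtain us where H: "length us = Suc m" "set us \<subseteq> univ S" "\<forall>u\<in>set us. ls S u (e g)" "sat S (pre us e) f"
      by blast
    then obtain vs x where us: "us = vs @ [x]" by (metis length_Suc_conv_rev)
    show "sat S e (bexs (Suc m) g f)"
      using H Suc[of "x ## e" "Suc g"] unfolding us by (auto simp: pre_snoc)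
  qed
qed

lemma delta0_bexs[simp]: "delta0 (bexs m g f) = delta0 f"
  by (induct m arbitrary: g) auto

definition ball :: "trm \<Rightarrow> fm \<Rightarrow> fm" where
  "ball t f = (if delta0 f then BAll t f else All (dj False (Neg (Lt (Var 0) (rent Suc t))) f))"

lemma sat_ball: "univ S \<noteq> {} \<Longrightarrow> sat S e (ball t f) \<longleftrightarrow> (\<forall>x\<in>univ S. ls S x (evt S e t) \<longrightarrow> sat S (x ## e) f)"
  by (auto simp: ball_def sat_dj)

lemma pi_ball: "pi k f \<Longrightarrow> pi k (ball t f)"
proof (cases "delta0 f")
  case True then show ?thesis by (simp add: ball_def delta0_pi)
next
  case False
  assume pf: "pi k f"
  then have "k \<noteq> 0" using False pi_0 by (cases k) auto
  then obtain k' where k: "k = Suc k'" by (cases k) auto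
  have "pi k (Neg (Lt (Var 0) (rent Suc t)))" by (rule delta0_pi) simp
  then have "pi k (dj False (Neg (Lt (Var 0) (rent Suc t))) f)" using pf by (rule dj_pi)
  then show ?thesis using False k by (simp add: ball_def sigma_pi.pAll)
qed

fun balls :: "nat \<Rightarrow> nat \<Rightarrow> fm \<Rightarrow> fm" where
  "balls 0 g f = f"
| "balls (Suc m) g f = ball (Var g) (balls m (Suc g) f)"

lemma sat_balls: "univ S \<noteq> {} \<Longrightarrow> sat S e (balls m g f) \<longleftrightarrow>
  (\<forall>us. length us = m \<longrightarrow> set us \<subseteq> univ S \<longrightarrow> (\<forall>u\<in>set us. ls S u (e g)) \<longrightarrow> sat S (pre us e) f)"
proof (induct m arbitrary: g e)
  case 0 then show ?case by auto
next
  case (Suc m)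
  show ?case
  proof
    assume A: "sat S e (balls (Suc m) g f)"
    show "\<forall>us. length us = Suc m \<longrightarrow> set us \<subseteq> univ S \<longrightarrow> (\<forall>u\<in>set us. ls S u (e g)) \<longrightarrow> sat S (pre us e) f"
    proof (intro allI impI)
      fix us assume H: "length us = Suc m" "set us \<subseteq> univ S" "\<forall>u\<in>set us. ls S u (e g)"
      then obtain vs x where us: "us = vs @ [x]" by (metis length_Suc_conv_rev)
      show "sat S (pre us e) f" using A H Suc.hyps[OF Suc.prems, of "x ## e" "Suc g"] Suc.prems unfolding us
        by (auto simp: pre_snoc sat_ball)
    qed
  next
    assume A: "\<forall>us. length us = Suc m \<longrightarrow> set us \<subseteq> univ S \<longrightarrow> (\<forall>u\<in>set us. ls S u (e g)) \<longrightarrow> sat S (pre us e) f"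
    show "sat S e (balls (Suc m) g f)"
      using Suc A by (auto simp: sat_ball pre_snoc[symmetric])
  qed
qed

lemma pi_balls: "pi k f \<Longrightarrow> pi k (balls m g f)"
  by (induct m arbitrary: g) (auto intro: pi_ball)

fun num :: "nat \<Rightarrow> trm" where
  "num 0 = Zero"
| "num (Suc n) = Plus (num n) One"

fun conjs :: "fm list \<Rightarrow> fm" where
  "conjs [] = Eq Zero Zero"
| "conjs (f # fs) = Conj f (conjs fs)"

lemma sat_conjs[simp]: "sat S e (conjs fs) = (\<forall>f\<in>set fs. sat S e f)"
  by (induct fs) auto

lemma delta0_conjs[simp]: "delta0 (conjs fs) = (\<forall>f\<in>set fs. delta0 f)"
  by (induct fs) auto


locale pa =
  fixes S :: "'a struc"
  assumes PA: "PA_minus S"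
begin

abbreviation U where "U \<equiv> univ S"
abbreviation ad (infixl "\<oplus>" 65) where "x \<oplus> y \<equiv> pl S x y"
abbreviation mu (infixl "\<otimes>" 70) where "x \<otimes> y \<equiv> tm S x y"
abbreviation lt (infix "\<prec>" 50) where "x \<prec> y \<equiv> ls S x y"
abbreviation le (infix "\<preceq>" 50) where "x \<preceq> y \<equiv> ls S x y \<or> x = y"
abbreviation z0 ("\<zero>") where "\<zero> \<equiv> zer S"
abbreviation o1 ("\<one>") where "\<one> \<equiv> one S"

lemma z_U[simp]: "\<zero> \<in> U" and o_U[simp]: "\<one> \<in> U"
  using PA by (auto simp: PA_minus_def wf_struc_def)
lemma ad_U[simp]: "x \<in> U \<Longrightarrow> y \<in> U \<Longrightarrow> x \<oplus> y \<in> U"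
  and mu_U[simp]: "x \<in> U \<Longrightarrow> y \<in> U \<Longrightarrow> x \<otimes> y \<in> U"
  using PA by (auto simp: PA_minus_def wf_struc_def)

lemma PAx: "(\<forall>x\<in>U. \<forall>y\<in>U. \<forall>w\<in>U. (x \<oplus> y) \<oplus> w = x \<oplus> (y \<oplus> w) \<and> (x \<otimes> y) \<otimes> w = x \<otimes> (y \<otimes> w) \<and> x \<otimes> (y \<oplus> w) = (x \<otimes> y) \<oplus> (x \<otimes> w)) \<and>
  (\<forall>x\<in>U. \<forall>y\<in>U. x \<oplus> y = y \<oplus> x \<and> x \<otimes> y = y \<otimes> x) \<and>
  (\<forall>x\<in>U. x \<oplus> \<zero> = x \<and> x \<otimes> \<zero> = \<zero> \<and> x \<otimes> \<one> = x) \<and>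
  (\<forall>x\<in>U. \<forall>y\<in>U. \<forall>w\<in>U. x \<prec> y \<and> y \<prec> w \<longrightarrow> x \<prec> w) \<and>
  (\<forall>x\<in>U. \<not> x \<prec> x) \<and>
  (\<forall>x\<in>U. \<forall>y\<in>U. x \<prec> y \<or> x = y \<or> y \<prec> x) \<and>
  (\<forall>x\<in>U. \<forall>y\<in>U. \<forall>w\<in>U. x \<prec> y \<longrightarrow> x \<oplus> w \<prec> y \<oplus> w) \<and>
  (\<forall>x\<in>U. \<forall>y\<in>U. \<forall>w\<in>U. \<zero> \<prec> w \<and> x \<prec> y \<longrightarrow> x \<otimes> w \<prec> y \<otimes> w) \<and>
  (\<forall>x\<in>U. \<forall>y\<in>U. x \<prec> y \<longrightarrow> (\<exists>w\<in>U. x \<oplus> w = y)) \<and>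
  \<zero> \<prec> \<one> \<and>
  (\<forall>x\<in>U. \<zero> \<prec> x \<longrightarrow> (\<one> = x \<or> \<one> \<prec> x)) \<and>
  (\<forall>x\<in>U. \<zero> = x \<or> \<zero> \<prec> x)"
  using PA unfolding PA_minus_def Let_def by (rule conjunct2)

lemmas c1 = PAx[THEN conjunct1]
lemmas c2 = PAx[THEN conjunct2, THEN conjunct1]
lemmas c3 = PAx[THEN conjunct2, THEN conjunct2, THEN conjunct1]
lemmas c4 = PAx[THEN conjunct2, THEN conjunct2, THEN conjunct2, THEN conjunct1]
lemmas c5 = PAx[THEN conjunct2, THEN conjunct2, THEN conjunct2, THEN conjunct2, THEN conjunct1]
lemmas c6 = PAx[THEN conjunct2, THEN conjunct2, THEN conjunct2, THEN conjunct2, THEN conjunct2, THEN conjunct1]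
lemmas c7 = PAx[THEN conjunct2, THEN conjunct2, THEN conjunct2, THEN conjunct2, THEN conjunct2, THEN conjunct2, THEN conjunct1]
lemmas c8 = PAx[THEN conjunct2, THEN conjunct2, THEN conjunct2, THEN conjunct2, THEN conjunct2, THEN conjunct2, THEN conjunct2, THEN conjunct1]
lemmas c9 = PAx[THEN conjunct2, THEN conjunct2, THEN conjunct2, THEN conjunct2, THEN conjunct2, THEN conjunct2, THEN conjunct2, THEN conjunct2, THEN conjunct1]
lemmas c10 = PAx[THEN conjunct2, THEN conjunct2, THEN conjunct2, THEN conjunct2, THEN conjunct2, THEN conjunct2, THEN conjunct2, THEN conjunct2, THEN conjunct2, THEN conjunct1]
lemmas c11 = PAx[THEN conjunct2, THEN conjunct2, THEN conjunct2, THEN conjunct2, THEN conjunct2, THEN conjunct2, THEN conjunct2, THEN conjunct2, THEN conjunct2, THEN conjunct2, THEN conjunct1]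
lemmas c12 = PAx[THEN conjunct2, THEN conjunct2, THEN conjunct2, THEN conjunct2, THEN conjunct2, THEN conjunct2, THEN conjunct2, THEN conjunct2, THEN conjunct2, THEN conjunct2, THEN conjunct2]
lemma ad_assoc: "x \<in> U \<Longrightarrow> y \<in> U \<Longrightarrow> w \<in> U \<Longrightarrow> (x \<oplus> y) \<oplus> w = x \<oplus> (y \<oplus> w)"
  using c1 by blast
lemma mu_assoc: "x \<in> U \<Longrightarrow> y \<in> U \<Longrightarrow> w \<in> U \<Longrightarrow> (x \<otimes> y) \<otimes> w = x \<otimes> (y \<otimes> w)"
  using c1 by blast
lemma distr: "x \<in> U \<Longrightarrow> y \<in> U \<Longrightarrow> w \<in> U \<Longrightarrow> x \<otimes> (y \<oplus> w) = (x \<otimes> y) \<oplus> (x \<otimes> w)"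
  using c1 by blast
lemma ad_comm: "x \<in> U \<Longrightarrow> y \<in> U \<Longrightarrow> x \<oplus> y = y \<oplus> x"
  using c2 by blast
lemma mu_comm: "x \<in> U \<Longrightarrow> y \<in> U \<Longrightarrow> x \<otimes> y = y \<otimes> x"
  using c2 by blast
lemma ad_0: "x \<in> U \<Longrightarrow> x \<oplus> \<zero> = x"
  using c3 by blast
lemma mu_0: "x \<in> U \<Longrightarrow> x \<otimes> \<zero> = \<zero>"
  using c3 by blast
lemma mu_1: "x \<in> U \<Longrightarrow> x \<otimes> \<one> = x"
  using c3 by blast
lemma lt_trans: "x \<in> U \<Longrightarrow> y \<in> U \<Longrightarrow> w \<in> U \<Longrightarrow> x \<prec> y \<Longrightarrow> y \<prec> w \<Longrightarrow> x \<prec> w"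
  using c4 by blast
lemma lt_irrefl: "x \<in> U \<Longrightarrow> \<not> x \<prec> x"
  using c5 by blast
lemma trich: "x \<in> U \<Longrightarrow> y \<in> U \<Longrightarrow> x \<prec> y \<or> x = y \<or> y \<prec> x"
  using c6 by blast
lemma ad_mono: "x \<in> U \<Longrightarrow> y \<in> U \<Longrightarrow> w \<in> U \<Longrightarrow> x \<prec> y \<Longrightarrow> x \<oplus> w \<prec> y \<oplus> w"
  using c7 by blast
lemma mu_mono: "x \<in> U \<Longrightarrow> y \<in> U \<Longrightarrow> w \<in> U \<Longrightarrow> \<zero> \<prec> w \<Longrightarrow> x \<prec> y \<Longrightarrow> x \<otimes> w \<prec> y \<otimes> w"
  using c8 by blast
lemma sub_ex: "x \<in> U \<Longrightarrow> y \<in> U \<Longrightarrow> x \<prec> y \<Longrightarrow> \<exists>w\<in>U. x \<oplus> w = y"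
  using c9 by blast
lemma zero_lt_one: "\<zero> \<prec> \<one>"
  using c10 by blast
lemma discr: "x \<in> U \<Longrightarrow> \<zero> \<prec> x \<Longrightarrow> \<one> = x \<or> \<one> \<prec> x"
  using c11 by blast
lemma zero_le: "x \<in> U \<Longrightarrow> \<zero> = x \<or> \<zero> \<prec> x"
  using c12 by blast

lemma ad_0l: "x \<in> U \<Longrightarrow> \<zero> \<oplus> x = x" by (simp add: ad_comm ad_0)
lemma mu_0l: "x \<in> U \<Longrightarrow> \<zero> \<otimes> x = \<zero>" by (simp add: mu_comm mu_0)
lemma mu_1l: "x \<in> U \<Longrightarrow> \<one> \<otimes> x = x" by (simp add: mu_comm mu_1)
lemma distr2: "x \<in> U \<Longrightarrow> y \<in> U \<Longrightarrow> w \<in> U \<Longrightarrow> (y \<oplus> w) \<otimes> x = (y \<otimes> x) \<oplus> (w \<otimes> x)"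
  by (simp add: mu_comm distr)
lemma ad_left_comm: "x \<in> U \<Longrightarrow> y \<in> U \<Longrightarrow> w \<in> U \<Longrightarrow> x \<oplus> (y \<oplus> w) = y \<oplus> (x \<oplus> w)"
proof -
  assume a: "x \<in> U" "y \<in> U" "w \<in> U"
  have "x \<oplus> (y \<oplus> w) = (x \<oplus> y) \<oplus> w" using a by (simp add: ad_assoc)
  also have "\<dots> = (y \<oplus> x) \<oplus> w" using a by (simp add: ad_comm)
  also have "\<dots> = y \<oplus> (x \<oplus> w)" using a by (simp add: ad_assoc)
  finally show ?thesis .
qed
lemma mu_left_comm: "x \<in> U \<Longrightarrow> y \<in> U \<Longrightarrow> w \<in> U \<Longrightarrow> x \<otimes> (y \<otimes> w) = y \<otimes> (x \<otimes> w)"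
proof -
  assume a: "x \<in> U" "y \<in> U" "w \<in> U"
  have "x \<otimes> (y \<otimes> w) = (x \<otimes> y) \<otimes> w" using a by (simp add: mu_assoc)
  also have "\<dots> = (y \<otimes> x) \<otimes> w" using a by (simp add: mu_comm)
  also have "\<dots> = y \<otimes> (x \<otimes> w)" using a by (simp add: mu_assoc)
  finally show ?thesis .
qed

lemmas ac = ad_assoc ad_comm ad_left_comm mu_assoc mu_comm mu_left_comm

lemma ad_mono2: "x \<in> U \<Longrightarrow> y \<in> U \<Longrightarrow> w \<in> U \<Longrightarrow> x \<prec> y \<Longrightarrow> w \<oplus> x \<prec> w \<oplus> y"
  using ad_mono[of x y w] by (simp add: ad_comm)

lemma lt_asym: "x \<in> U \<Longrightarrow> y \<in> U \<Longrightarrow> x \<prec> y \<Longrightarrow> \<not> y \<prec> x"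
  using lt_irrefl lt_trans by blast

lemma ad_cancel: "x \<in> U \<Longrightarrow> y \<in> U \<Longrightarrow> w \<in> U \<Longrightarrow> x \<oplus> w = y \<oplus> w \<Longrightarrow> x = y"
  using trich[of x y] ad_mono[of x y w] ad_mono[of y x w] lt_irrefl[of "x \<oplus> w"] by auto

lemma ad_cancel2: "x \<in> U \<Longrightarrow> y \<in> U \<Longrightarrow> w \<in> U \<Longrightarrow> w \<oplus> x = w \<oplus> y \<Longrightarrow> x = y"
  using ad_cancel[of x y w] by (simp add: ad_comm)

lemma ad_lt_cancel: "x \<in> U \<Longrightarrow> y \<in> U \<Longrightarrow> w \<in> U \<Longrightarrow> x \<oplus> w \<prec> y \<oplus> w \<Longrightarrow> x \<prec> y"
  using trich[of x y] ad_mono[of y x w] lt_asym[of "x \<oplus> w" "y \<oplus> w"] lt_irrefl[of "x \<oplus> w"] by auto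

lemma ad_lt_cancel2: "x \<in> U \<Longrightarrow> y \<in> U \<Longrightarrow> w \<in> U \<Longrightarrow> w \<oplus> x \<prec> w \<oplus> y \<Longrightarrow> x \<prec> y"
  using ad_lt_cancel[of x y w] by (simp add: ad_comm)

lemma ad_le_mono: "x \<in> U \<Longrightarrow> y \<in> U \<Longrightarrow> w \<in> U \<Longrightarrow> x \<preceq> y \<Longrightarrow> x \<oplus> w \<preceq> y \<oplus> w"
  using ad_mono by blast

lemma ad_le_mono2: "x \<in> U \<Longrightarrow> y \<in> U \<Longrightarrow> w \<in> U \<Longrightarrow> x \<preceq> y \<Longrightarrow> w \<oplus> x \<preceq> w \<oplus> y"
  using ad_mono2 by blast

lemma le_ad: "x \<in> U \<Longrightarrow> y \<in> U \<Longrightarrow> x \<preceq> x \<oplus> y"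
  using zero_le[of y] ad_mono2[of "\<zero>" y x] by (auto simp: ad_0)

lemma lt_ad_pos: "x \<in> U \<Longrightarrow> y \<in> U \<Longrightarrow> \<zero> \<prec> y \<Longrightarrow> x \<prec> x \<oplus> y"
  using ad_mono2[of "\<zero>" y x] by (auto simp: ad_0)

lemma lt_ad1: "x \<in> U \<Longrightarrow> x \<prec> x \<oplus> \<one>"
  by (simp add: lt_ad_pos zero_lt_one)

lemma le_lt_trans: "x \<in> U \<Longrightarrow> y \<in> U \<Longrightarrow> w \<in> U \<Longrightarrow> x \<preceq> y \<Longrightarrow> y \<prec> w \<Longrightarrow> x \<prec> w"
  using lt_trans by blast
lemma lt_le_trans: "x \<in> U \<Longrightarrow> y \<in> U \<Longrightarrow> w \<in> U \<Longrightarrow> x \<prec> y \<Longrightarrow> y \<preceq> w \<Longrightarrow> x \<prec> w"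
  using lt_trans by blast
lemma le_trans: "x \<in> U \<Longrightarrow> y \<in> U \<Longrightarrow> w \<in> U \<Longrightarrow> x \<preceq> y \<Longrightarrow> y \<preceq> w \<Longrightarrow> x \<preceq> w"
  using lt_trans by blast

lemma not_lt: "x \<in> U \<Longrightarrow> y \<in> U \<Longrightarrow> \<not> x \<prec> y \<longleftrightarrow> y \<preceq> x"
  using lt_asym[of x y] lt_irrefl[of x] trich[of x y] by auto

lemma lt_iff_succ_le: "x \<in> U \<Longrightarrow> y \<in> U \<Longrightarrow> x \<prec> y \<longleftrightarrow> x \<oplus> \<one> \<preceq> y"
proof
  assume x: "x \<in> U" and y: "y \<in> U" and "x \<prec> y"
  then obtain w where w: "w \<in> U" "x \<oplus> w = y" using sub_ex by blast
  have "w \<noteq> \<zero>" using w x \<open>x \<prec> y\<close> ad_0 lt_irrefl by auto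
  then have "\<zero> \<prec> w" using zero_le w by auto
  then have "\<one> \<preceq> w" using discr w by auto
  then show "x \<oplus> \<one> \<preceq> y" using w x ad_le_mono2[of "\<one>" w x] by simp
next
  assume x: "x \<in> U" and y: "y \<in> U" and "x \<oplus> \<one> \<preceq> y"
  then show "x \<prec> y" using lt_ad1[of x] lt_le_trans[of x "x \<oplus> \<one>" y] by simp
qed

lemma lt_succ_iff: "x \<in> U \<Longrightarrow> y \<in> U \<Longrightarrow> x \<prec> y \<oplus> \<one> \<longleftrightarrow> x \<preceq> y"
proof -
  assume x: "x \<in> U" and y: "y \<in> U"
  have "x \<prec> y \<oplus> \<one> \<longleftrightarrow> \<not> (y \<oplus> \<one> \<preceq> x)" using not_lt[of x "y \<oplus> \<one>"] x y by auto
  also have "\<dots> \<longleftrightarrow> \<not> y \<prec> x" using lt_iff_succ_le[of y x] x y by simp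
  also have "\<dots> \<longleftrightarrow> x \<preceq> y" using not_lt[of y x] x y by simp
  finally show ?thesis .
qed

lemma le_ex: "x \<in> U \<Longrightarrow> y \<in> U \<Longrightarrow> x \<preceq> y \<Longrightarrow> \<exists>w\<in>U. x \<oplus> w = y"
  using sub_ex ad_0 z_U by blast

lemma ad_eq_0: "x \<in> U \<Longrightarrow> y \<in> U \<Longrightarrow> x \<oplus> y = \<zero> \<Longrightarrow> x = \<zero>"
  using zero_le[of x] le_ad[of x y] lt_asym[of "\<zero>" x] by auto

lemma mu_le_mono: "x \<in> U \<Longrightarrow> y \<in> U \<Longrightarrow> w \<in> U \<Longrightarrow> x \<preceq> y \<Longrightarrow> x \<otimes> w \<preceq> y \<otimes> w"
  using zero_le[of w] mu_mono[of x y w] by (auto simp: mu_0)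

lemma mu_le_mono2: "x \<in> U \<Longrightarrow> y \<in> U \<Longrightarrow> w \<in> U \<Longrightarrow> x \<preceq> y \<Longrightarrow> w \<otimes> x \<preceq> w \<otimes> y"
  using mu_le_mono[of x y w] by (simp add: mu_comm)

lemma mu_mono2: "x \<in> U \<Longrightarrow> y \<in> U \<Longrightarrow> w \<in> U \<Longrightarrow> \<zero> \<prec> w \<Longrightarrow> x \<prec> y \<Longrightarrow> w \<otimes> x \<prec> w \<otimes> y"
  using mu_mono[of x y w] by (simp add: mu_comm)

lemma mu_lt_cancel: "x \<in> U \<Longrightarrow> y \<in> U \<Longrightarrow> w \<in> U \<Longrightarrow> x \<otimes> w \<prec> y \<otimes> w \<Longrightarrow> x \<prec> y"
  using mu_le_mono[of y x w] not_lt[of x y] not_lt[of "x \<otimes> w" "y \<otimes> w"] by auto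

lemma mu_cancel: "x \<in> U \<Longrightarrow> y \<in> U \<Longrightarrow> w \<in> U \<Longrightarrow> \<zero> \<prec> w \<Longrightarrow> x \<otimes> w = y \<otimes> w \<Longrightarrow> x = y"
  using trich[of x y] mu_mono[of x y w] mu_mono[of y x w] lt_irrefl[of "x \<otimes> w"] by auto

lemma pos_ge1: "x \<in> U \<Longrightarrow> \<zero> \<prec> x \<Longrightarrow> \<one> \<preceq> x"
  using discr by auto

lemma le_mu_pos: "x \<in> U \<Longrightarrow> w \<in> U \<Longrightarrow> \<zero> \<prec> w \<Longrightarrow> x \<preceq> x \<otimes> w"
  using mu_le_mono2[of "\<one>" w x] pos_ge1[of w] by (auto simp: mu_1)

lemma mu_pos: "x \<in> U \<Longrightarrow> y \<in> U \<Longrightarrow> \<zero> \<prec> x \<Longrightarrow> \<zero> \<prec> y \<Longrightarrow> \<zero> \<prec> x \<otimes> y"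
  using mu_mono[of "\<zero>" x y] by (simp add: mu_0l)

lemma le_antisym: "x \<in> U \<Longrightarrow> y \<in> U \<Longrightarrow> x \<preceq> y \<Longrightarrow> y \<preceq> x \<Longrightarrow> x = y"
  using lt_asym by blast

end


lemma cons_env_numeral[simp]: "(x ## e) (numeral n) = e (pred_numeral n)"
  by (simp add: cons_env_def numeral_eq_Suc)

definition Ef :: "fm \<Rightarrow> trm \<Rightarrow> trm \<Rightarrow> fm" where
  "Ef E t1 t2 = sbst (\<lambda>k. if k = 0 then t1 else if k = 1 then t2 else Zero) E"

lemma delta0_Ef[simp]: "delta0 (Ef E t1 t2) = delta0 E"
  by (simp add: Ef_def)

definition lift3 :: "trm \<Rightarrow> trm" where "lift3 t = rent Suc (rent Suc (rent Suc t))"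

lemma evt_lift3[simp]: "evt S (a ## b ## c ## e) (lift3 t) = evt S e t"
  by (simp add: lift3_def)

lemma evt_lift1[simp]: "evt S (a ## e) (rent Suc t) = evt S e t"
  by simp

definition Bit :: "fm \<Rightarrow> trm \<Rightarrow> trm \<Rightarrow> fm" where
  "Bit E t1 t2 = BEx (Plus t2 One) (Conj (Ef E (rent Suc t1) (Var 0))
     (BEx (Plus (rent Suc t2) One) (BEx (Var 1) (Conj (Eq (lift3 t2) (Plus (Times (Var 1) (Var 2)) (Var 0)))
        (BEx (Plus (lift3 t2) One) (Eq (Var 2) (Plus (Plus (Var 0) (Var 0)) One)))))))"

lemma delta0_Bit[simp]: "delta0 (Bit E t1 t2) = delta0 E"
  by (simp add: Bit_def)

locale ari = pa S for S :: "'a struc" +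
  fixes E :: fm
  assumes ID: "IDelta0 S"
    and dE: "delta0 E"
    and exE: "\<And>e. env S e \<Longrightarrow>
        sat S (zer S ## one S ## e) E \<and>
        (\<forall>x\<in>univ S. \<forall>y\<in>univ S. sat S (x ## y ## e) E \<longrightarrow> sat S (pl S x (one S) ## pl S y y ## e) E) \<and>
        (\<forall>x\<in>univ S. \<forall>y\<in>univ S. \<forall>y'\<in>univ S. sat S (x ## y ## e) E \<and> sat S (x ## y' ## e) E \<longrightarrow> y = y') \<and>
        (\<forall>x\<in>univ S. \<exists>y\<in>univ S. sat S (x ## y ## e) E)"
begin

lemma env_z: "env S (\<lambda>_. \<zero>)" by (simp add: env_def image_subset_iff)

lemma ind:
  assumes "delta0 f" "env S e" "sat S (\<zero> ## e) f"
    "\<And>x. x \<in> U \<Longrightarrow> sat S (x ## e) f \<Longrightarrow> sat S ((x \<oplus> \<one>) ## e) f" "x \<in> U"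
  shows "sat S (x ## e) f"
  using ID assms unfolding IDelta0_def by blast

definition expR :: "'a \<Rightarrow> 'a \<Rightarrow> bool" where
  "expR x y = sat S (x ## y ## (\<lambda>_. \<zero>)) E"

lemma expR_0: "expR \<zero> \<one>"
  using exE[OF env_z] by (simp add: expR_def)
lemma expR_S: "x \<in> U \<Longrightarrow> y \<in> U \<Longrightarrow> expR x y \<Longrightarrow> expR (x \<oplus> \<one>) (y \<oplus> y)"
  using exE[OF env_z] by (simp add: expR_def)
lemma expR_fun: "x \<in> U \<Longrightarrow> y \<in> U \<Longrightarrow> y' \<in> U \<Longrightarrow> expR x y \<Longrightarrow> expR x y' \<Longrightarrow> y = y'"
  using exE[OF env_z] by (simp add: expR_def)
lemma expR_tot: "x \<in> U \<Longrightarrow> \<exists>y\<in>U. expR x y"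
  using exE[OF env_z] by (simp add: expR_def)

definition P :: "'a \<Rightarrow> 'a" where "P x = (THE y. y \<in> U \<and> expR x y)"

lemma P_prop: "x \<in> U \<Longrightarrow> P x \<in> U \<and> expR x (P x)"
proof -
  assume x: "x \<in> U"
  obtain y where y: "y \<in> U" "expR x y" using expR_tot[OF x] by blast
  have "\<exists>!y. y \<in> U \<and> expR x y" using y expR_fun[OF x] by blast
  then show ?thesis unfolding P_def by (rule theI')
qed

lemma P_U[simp]: "x \<in> U \<Longrightarrow> P x \<in> U" using P_prop by blast
lemma expR_P: "x \<in> U \<Longrightarrow> expR x (P x)" using P_prop by blast
lemma expR_eq: "x \<in> U \<Longrightarrow> y \<in> U \<Longrightarrow> expR x y \<longleftrightarrow> y = P x"
  using expR_fun expR_P P_U by blast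

lemma P_0: "P \<zero> = \<one>" using expR_eq[of "\<zero>" "\<one>"] expR_0 by simp
lemma P_S: "x \<in> U \<Longrightarrow> P (x \<oplus> \<one>) = P x \<oplus> P x"
  using expR_eq[of "x \<oplus> \<one>" "P x \<oplus> P x"] expR_S[of x "P x"] expR_P by simp

lemma sat_Ef: "sat S e (Ef E t1 t2) = expR (evt S e t1) (evt S e t2)"
proof -
  have "(\<lambda>i. evt S e (if i = 0 then t1 else if i = 1 then t2 else Zero)) = evt S e t1 ## evt S e t2 ## (\<lambda>_. \<zero>)"
    by (rule ext) (simp add: cons_env_def split: nat.split)
  then show ?thesis by (simp add: Ef_def expR_def)
qed

lemma evt_U: "env S e \<Longrightarrow> evt S e t \<in> U"
  by (induct t) (auto simp: env_def)


lemma P_gt: "x \<in> U \<Longrightarrow> x \<prec> P x"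
proof -
  assume x: "x \<in> U"
  define B where "B = P x \<oplus> \<one>"
  have B: "B \<in> U" using x by (simp add: B_def)
  define f where "f = BAll (Var 1) (Disj (Neg (Ef E (Var 1) (Var 0))) (Lt (Var 1) (Var 0)))"
  have df: "delta0 f" using dE by (simp add: f_def)
  have sf: "sat S (v ## (\<lambda>_. B)) f \<longleftrightarrow> (\<forall>z\<in>U. z \<prec> B \<longrightarrow> expR v z \<longrightarrow> v \<prec> z)" for v
    by (simp add: f_def sat_Ef)
  have env: "env S (\<lambda>_. B)" using B by (simp add: env_def image_subset_iff)
  have "sat S (x ## (\<lambda>_. B)) f"
  proof (rule ind[OF df env _ _ x])
    show "sat S (\<zero> ## (\<lambda>_. B)) f" unfolding sf using expR_eq P_0 zero_lt_one by auto
  next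
    fix v assume v: "v \<in> U" and IH: "sat S (v ## (\<lambda>_. B)) f"
    show "sat S ((v \<oplus> \<one>) ## (\<lambda>_. B)) f" unfolding sf
    proof (intro ballI impI)
      fix z assume z: "z \<in> U" "z \<prec> B" "expR (v \<oplus> \<one>) z"
      then have zz: "z = P v \<oplus> P v" using expR_eq P_S v by simp
      have "P v \<preceq> z" using zz le_ad v by simp
      then have "P v \<prec> B" using z le_lt_trans[of "P v" z B] v B by simp
      then have lt: "v \<prec> P v" using IH sf v expR_P by auto
      then have "\<zero> \<prec> P v" using zero_le[of v] v lt_trans[of "\<zero>" v "P v"] by auto
      then have "P v \<prec> z" using zz lt_ad_pos v by simp
      moreover have "v \<oplus> \<one> \<preceq> P v" using lt lt_iff_succ_le v by simp
      ultimately show "v \<oplus> \<one> \<prec> z" using le_lt_trans[of "v \<oplus> \<one>" "P v" z] v z by simp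
    qed
  qed
  then show ?thesis using sf x expR_P lt_ad1[of "P x"] by (auto simp: B_def)
qed

lemma P_pos: "x \<in> U \<Longrightarrow> \<zero> \<prec> P x"
proof -
  assume x: "x \<in> U"
  show ?thesis using P_gt[OF x] zero_le[OF x] lt_trans[of "\<zero>" x "P x"] x by auto
qed

lemma P_add: "i \<in> U \<Longrightarrow> j \<in> U \<Longrightarrow> P (i \<oplus> j) = P i \<otimes> P j"
proof -
  assume i: "i \<in> U" and j: "j \<in> U"
  define B where "B = P j \<oplus> P (i \<oplus> j) \<oplus> \<one>"
  have B: "B \<in> U" using i j by (simp add: B_def)
  define e where "e = B ## i ## P i ## (\<lambda>_. \<zero>)"
  have env: "env S e" using B i unfolding e_def by (intro env_cons env_z) auto
  define f where "f = BAll (Var 1) (BAll (Var 2) (Disj (Neg (Conj (Ef E (Var 2) (Var 1))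
       (Ef E (Plus (Var 4) (Var 2)) (Var 0)))) (Eq (Var 0) (Times (Var 5) (Var 1)))))"
  have df: "delta0 f" using dE by (simp add: f_def)
  have sf: "sat S (v ## e) f \<longleftrightarrow> (\<forall>z\<in>U. z \<prec> B \<longrightarrow> (\<forall>w\<in>U. w \<prec> B \<longrightarrow>
      expR v z \<longrightarrow> expR (i \<oplus> v) w \<longrightarrow> w = P i \<otimes> z))" for v
    by (simp add: f_def sat_Ef e_def)
  have "sat S (j ## e) f"
  proof (rule ind[OF df env _ _ j])
    show "sat S (\<zero> ## e) f" unfolding sf using expR_eq P_0 i by (auto simp: ad_0 mu_1)
  next
    fix v assume v: "v \<in> U" and IH: "sat S (v ## e) f"
    show "sat S ((v \<oplus> \<one>) ## e) f" unfolding sf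
    proof (intro ballI impI)
      fix z w assume z: "z \<in> U" "z \<prec> B" "expR (v \<oplus> \<one>) z" and w: "w \<in> U" "w \<prec> B" "expR (i \<oplus> (v \<oplus> \<one>)) w"
      have zz: "z = P v \<oplus> P v" using z expR_eq P_S v by simp
      have ww: "w = P (i \<oplus> v) \<oplus> P (i \<oplus> v)" using w expR_eq P_S[of "i \<oplus> v"] v i ad_assoc[of i v "\<one>"] by simp
      have "P v \<prec> B" using zz le_ad v z le_lt_trans[of "P v" z B] B by auto
      moreover have "P (i \<oplus> v) \<prec> B" using ww le_ad v i w le_lt_trans[of "P (i \<oplus> v)" w B] B by auto
      ultimately have "P (i \<oplus> v) = P i \<otimes> P v" using IH sf v i expR_P by auto
      then show "w = P i \<otimes> z" using ww zz distr[of "P i" "P v" "P v"] v i by simp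
    qed
  qed
  moreover have "P j \<prec> B" using i j le_ad[of "P j" "P (i \<oplus> j)"] lt_ad1[of "P j \<oplus> P (i \<oplus> j)"]
      le_lt_trans[of "P j" "P j \<oplus> P (i \<oplus> j)" B] by (simp add: B_def)
  moreover have "P (i \<oplus> j) \<prec> B" using i j le_ad[of "P (i \<oplus> j)" "P j"] ad_comm[of "P j" "P (i \<oplus> j)"] lt_ad1[of "P j \<oplus> P (i \<oplus> j)"]
      le_lt_trans[of "P (i \<oplus> j)" "P j \<oplus> P (i \<oplus> j)" B] by (simp add: B_def)
  ultimately show ?thesis using sf i j expR_P by simp
qed


lemma div_ex: "d \<in> U \<Longrightarrow> \<zero> \<prec> d \<Longrightarrow> N \<in> U \<Longrightarrow> \<exists>q\<in>U. \<exists>r\<in>U. N = q \<otimes> d \<oplus> r \<and> r \<prec> d"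
proof -
  assume d: "d \<in> U" "\<zero> \<prec> d" and N: "N \<in> U"
  define e where "e = d ## (\<lambda>_. \<zero>)"
  have env: "env S e" using d unfolding e_def by (intro env_cons env_z) auto
  define f where "f = BEx (Plus (Var 0) One) (BEx (Var 2) (Eq (Var 2) (Plus (Times (Var 1) (Var 3)) (Var 0))))"
  have df: "delta0 f" by (simp add: f_def)
  have sf: "sat S (v ## e) f \<longleftrightarrow> (\<exists>q\<in>U. q \<prec> v \<oplus> \<one> \<and> (\<exists>r\<in>U. r \<prec> d \<and> v = q \<otimes> d \<oplus> r))" for v
    by (simp add: f_def e_def)
  have "sat S (N ## e) f"
  proof (rule ind[OF df env _ _ N])
    show "sat S (\<zero> ## e) f" unfolding sf using d zero_lt_one
      by (intro bexI[of _ "\<zero>"]) (auto simp: mu_0l ad_0 ad_0l)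
  next
    fix v assume v: "v \<in> U" and IH: "sat S (v ## e) f"
    then obtain q r where qr: "q \<in> U" "q \<prec> v \<oplus> \<one>" "r \<in> U" "r \<prec> d" "v = q \<otimes> d \<oplus> r"
      using sf by blast
    have q1: "q \<oplus> \<one> \<prec> v \<oplus> \<one> \<oplus> \<one>" using qr v ad_mono by simp
    have q2: "q \<prec> v \<oplus> \<one> \<oplus> \<one>" using qr v lt_trans[of q "v \<oplus> \<one>" "v \<oplus> \<one> \<oplus> \<one>"] lt_ad1 by simp
    show "sat S ((v \<oplus> \<one>) ## e) f" unfolding sf
    proof (cases "r \<oplus> \<one> = d")
      case True
      have eq: "v \<oplus> \<one> = (q \<oplus> \<one>) \<otimes> d \<oplus> \<zero>" using qr d True
        by (simp add: distr2 mu_1l ad_0 ad_assoc)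
      show "\<exists>q\<in>U. q \<prec> v \<oplus> \<one> \<oplus> \<one> \<and> (\<exists>r\<in>U. r \<prec> d \<and> v \<oplus> \<one> = q \<otimes> d \<oplus> r)"
      proof (rule bexI[of _ "q \<oplus> \<one>"])
        show "q \<oplus> \<one> \<prec> v \<oplus> \<one> \<oplus> \<one> \<and> (\<exists>r\<in>U. r \<prec> d \<and> v \<oplus> \<one> = (q \<oplus> \<one>) \<otimes> d \<oplus> r)"
          using q1 eq d z_U by blast
      qed (use qr in simp)
    next
      case False
      then have "r \<oplus> \<one> \<prec> d" using qr d lt_iff_succ_le by auto
      moreover have "v \<oplus> \<one> = q \<otimes> d \<oplus> (r \<oplus> \<one>)" using qr d by (simp add: ad_assoc)
      ultimately show "\<exists>q\<in>U. q \<prec> v \<oplus> \<one> \<oplus> \<one> \<and> (\<exists>r\<in>U. r \<prec> d \<and> v \<oplus> \<one> = q \<otimes> d \<oplus> r)"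
        using q2 qr(1,3) d o_U ad_U by blast
    qed
  qed
  then show ?thesis using sf by blast
qed

lemma div_uniq:
  assumes "q \<in> U" "r \<in> U" "q' \<in> U" "r' \<in> U" "d \<in> U" "r \<prec> d" "r' \<prec> d"
    "q \<otimes> d \<oplus> r = q' \<otimes> d \<oplus> r'"
  shows "q = q' \<and> r = r'"
proof -
  have c: False if A: "a \<in> U" "b \<in> U" "s \<in> U" "t \<in> U" "s \<prec> d" "a \<prec> b" "a \<otimes> d \<oplus> s = b \<otimes> d \<oplus> t" for a b s t
  proof -
    have "a \<oplus> \<one> \<preceq> b" using A lt_iff_succ_le by simp
    then have "(a \<oplus> \<one>) \<otimes> d \<preceq> b \<otimes> d" using A assms mu_le_mono by simp
    then have "a \<otimes> d \<oplus> d \<preceq> b \<otimes> d" using A assms by (simp add: distr2 mu_1l)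
    moreover have "b \<otimes> d \<preceq> b \<otimes> d \<oplus> t" using A assms le_ad by simp
    moreover have "a \<otimes> d \<oplus> s \<prec> a \<otimes> d \<oplus> d" using A assms ad_mono2[of s d "a \<otimes> d"] by simp
    ultimately have "a \<otimes> d \<oplus> s \<prec> b \<otimes> d \<oplus> t" using A assms
      lt_le_trans[of "a \<otimes> d \<oplus> s" "a \<otimes> d \<oplus> d" "b \<otimes> d"] lt_le_trans[of "a \<otimes> d \<oplus> s" "b \<otimes> d" "b \<otimes> d \<oplus> t"]
      by simp
    then show False using A lt_irrefl[of "b \<otimes> d \<oplus> t"] assms by simp
  qed
  have "q = q'"
    using trich[of q q'] c[of q q' r r'] c[of q' q r' r] assms by auto
  then show ?thesis using assms ad_cancel2 by (metis mu_U)
qed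

definition odd :: "'a \<Rightarrow> bool" where "odd q = (\<exists>h\<in>U. q = h \<oplus> h \<oplus> \<one>)"

lemma par_ex: "x \<in> U \<Longrightarrow> \<exists>h\<in>U. x = h \<oplus> h \<or> x = h \<oplus> h \<oplus> \<one>"
proof -
  assume x: "x \<in> U"
  define f where "f = BEx (Plus (Var 0) One) (Disj (Eq (Var 1) (Plus (Var 0) (Var 0))) (Eq (Var 1) (Plus (Plus (Var 0) (Var 0)) One)))"
  have df: "delta0 f" by (simp add: f_def)
  have sf: "sat S (v ## (\<lambda>_. \<zero>)) f \<longleftrightarrow> (\<exists>h\<in>U. h \<prec> v \<oplus> \<one> \<and> (v = h \<oplus> h \<or> v = h \<oplus> h \<oplus> \<one>))" for v
    by (simp add: f_def)
  have "sat S (x ## (\<lambda>_. \<zero>)) f"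
  proof (rule ind[OF df env_z _ _ x])
    show "sat S (\<zero> ## (\<lambda>_. \<zero>)) f" unfolding sf using zero_lt_one
      by (intro bexI[of _ "\<zero>"]) (auto simp: ad_0 ad_0l)
  next
    fix v assume v: "v \<in> U" and IH: "sat S (v ## (\<lambda>_. \<zero>)) f"
    then obtain h where h: "h \<in> U" "h \<prec> v \<oplus> \<one>" "v = h \<oplus> h \<or> v = h \<oplus> h \<oplus> \<one>" using sf by blast
    have h1: "h \<oplus> \<one> \<prec> v \<oplus> \<one> \<oplus> \<one>" using h v ad_mono by simp
    have h2: "h \<prec> v \<oplus> \<one> \<oplus> \<one>" using h v lt_trans[of h "v \<oplus> \<one>" "v \<oplus> \<one> \<oplus> \<one>"] lt_ad1 by simp
    show "sat S ((v \<oplus> \<one>) ## (\<lambda>_. \<zero>)) f" unfolding sf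
    proof (cases "v = h \<oplus> h")
      case True then show "\<exists>h\<in>U. h \<prec> v \<oplus> \<one> \<oplus> \<one> \<and> (v \<oplus> \<one> = h \<oplus> h \<or> v \<oplus> \<one> = h \<oplus> h \<oplus> \<one>)"
        using h2 h by auto
    next
      case False
      then have "v \<oplus> \<one> = (h \<oplus> \<one>) \<oplus> (h \<oplus> \<one>)" using h by (simp add: ac)
      then show "\<exists>h\<in>U. h \<prec> v \<oplus> \<one> \<oplus> \<one> \<and> (v \<oplus> \<one> = h \<oplus> h \<or> v \<oplus> \<one> = h \<oplus> h \<oplus> \<one>)"
        using h1 h by (intro bexI[of _ "h \<oplus> \<one>"]) auto
    qed
  qed
  then show ?thesis using sf by blast
qed

lemma par_excl: "h \<in> U \<Longrightarrow> h' \<in> U \<Longrightarrow> h \<oplus> h \<noteq> h' \<oplus> h' \<oplus> \<one>"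
proof
  assume h: "h \<in> U" "h' \<in> U" and eq: "h \<oplus> h = h' \<oplus> h' \<oplus> \<one>"
  consider "h \<preceq> h'" | "h' \<prec> h" using trich h by blast
  then show False
  proof cases
    case 1
    then have "h \<oplus> h \<preceq> h' \<oplus> h'" using h ad_le_mono ad_le_mono2 le_trans[of "h \<oplus> h" "h' \<oplus> h" "h' \<oplus> h'"] by simp
    then show False using eq h lt_ad1[of "h' \<oplus> h'"] lt_asym by (metis ad_U)
  next
    case 2
    then have "h' \<oplus> \<one> \<preceq> h" using h lt_iff_succ_le by simp
    then have "(h' \<oplus> \<one>) \<oplus> (h' \<oplus> \<one>) \<preceq> h \<oplus> h" using h ad_le_mono ad_le_mono2
        le_trans[of "(h' \<oplus> \<one>) \<oplus> (h' \<oplus> \<one>)" "h \<oplus> (h' \<oplus> \<one>)" "h \<oplus> h"] by simp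
    moreover have "(h' \<oplus> \<one>) \<oplus> (h' \<oplus> \<one>) = (h' \<oplus> h' \<oplus> \<one>) \<oplus> \<one>" using h by (simp add: ac)
    ultimately show False using eq h lt_ad1[of "h' \<oplus> h' \<oplus> \<one>"] lt_asym by (metis ad_U o_U)
  qed
qed

lemma odd_tt: "t \<in> U \<Longrightarrow> q \<in> U \<Longrightarrow> odd (t \<oplus> t \<oplus> q) \<longleftrightarrow> odd q"
proof -
  assume t: "t \<in> U" and q: "q \<in> U"
  obtain s where s: "s \<in> U" "q = s \<oplus> s \<or> q = s \<oplus> s \<oplus> \<one>" using par_ex q by blast
  show ?thesis
  proof (cases "q = s \<oplus> s")
    case True
    have "t \<oplus> t \<oplus> q = (t \<oplus> s) \<oplus> (t \<oplus> s)" using True s t by (simp add: ac)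
    then show ?thesis using True s t par_excl unfolding odd_def by (metis ad_U)
  next
    case False
    then have qq: "q = s \<oplus> s \<oplus> \<one>" using s by auto
    have "t \<oplus> t \<oplus> q = (t \<oplus> s) \<oplus> (t \<oplus> s) \<oplus> \<one>" using qq s t by (simp add: ac)
    then show ?thesis using qq s t unfolding odd_def by (metis ad_U)
  qed
qed

end


context ari
begin

definition bitS :: "'a \<Rightarrow> 'a \<Rightarrow> bool" where
  "bitS k N = (\<exists>q\<in>U. \<exists>r\<in>U. N = q \<otimes> P k \<oplus> r \<and> r \<prec> P k \<and> odd q)"

lemma bit_char:
  assumes "Q \<in> U" "R \<in> U" "k \<in> U" "R \<prec> P k"
  shows "bitS k (Q \<otimes> P k \<oplus> R) \<longleftrightarrow> odd Q"
proof
  assume "bitS k (Q \<otimes> P k \<oplus> R)"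
  then obtain q r where qr: "q \<in> U" "r \<in> U" "Q \<otimes> P k \<oplus> R = q \<otimes> P k \<oplus> r" "r \<prec> P k" "odd q"
    unfolding bitS_def by blast
  then have "Q = q" using div_uniq[of Q R q r "P k"] assms by simp
  then show "odd Q" using qr by simp
next
  assume "odd Q" then show "bitS k (Q \<otimes> P k \<oplus> R)" unfolding bitS_def using assms by blast
qed

lemma odd_pos: "q \<in> U \<Longrightarrow> odd q \<Longrightarrow> \<zero> \<prec> q"
  unfolding odd_def using lt_ad_pos zero_le le_lt_trans
  by (metis ad_U ad_0l lt_ad1 o_U z_U zero_lt_one)

lemma bit_lt: "k \<in> U \<Longrightarrow> N \<in> U \<Longrightarrow> bitS k N \<Longrightarrow> k \<prec> N"
proof -
  assume k: "k \<in> U" and N: "N \<in> U" and "bitS k N"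
  then obtain q r where qr: "q \<in> U" "r \<in> U" "N = q \<otimes> P k \<oplus> r" "r \<prec> P k" "odd q"
    unfolding bitS_def by blast
  have "\<zero> \<prec> q" using odd_pos qr by simp
  then have "P k \<preceq> P k \<otimes> q" using le_mu_pos[of "P k" q] qr k by simp
  then have "P k \<preceq> q \<otimes> P k" using mu_comm[of q "P k"] qr k by simp
  moreover have "q \<otimes> P k \<preceq> N" using qr le_ad k by simp
  moreover have "k \<prec> P k" using P_gt k by simp
  ultimately show "k \<prec> N" using qr k lt_le_trans[of k "P k" "q \<otimes> P k"] lt_le_trans[of k "q \<otimes> P k" N] N
    by simp
qed

lemma bit_0: "k \<in> U \<Longrightarrow> \<not> bitS k \<zero>"
  using bit_lt[of k "\<zero>"] zero_le[of k] lt_asym[of "\<zero>" k] lt_irrefl[of "\<zero>"] by auto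


lemma rem_bound:
  assumes "r' \<in> U" "r \<in> U" "A \<in> U" "B \<in> U" "r' \<prec> B" "r \<prec> A"
  shows "r' \<otimes> A \<oplus> r \<prec> B \<otimes> A"
proof -
  have "r' \<oplus> \<one> \<preceq> B" using assms lt_iff_succ_le by simp
  then have "(r' \<oplus> \<one>) \<otimes> A \<preceq> B \<otimes> A" using assms mu_le_mono by simp
  then have "r' \<otimes> A \<oplus> A \<preceq> B \<otimes> A" using assms by (simp add: distr2 mu_1l)
  moreover have "r' \<otimes> A \<oplus> r \<prec> r' \<otimes> A \<oplus> A" using assms ad_mono2 by simp
  ultimately show ?thesis using assms lt_le_trans[of "r' \<otimes> A \<oplus> r" "r' \<otimes> A \<oplus> A" "B \<otimes> A"] by simp
qed

lemma bit_high:
  assumes m: "m \<in> U" and d: "d \<in> U" and h: "h \<in> U" and r: "r \<in> U" and rl: "r \<prec> P m"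
  shows "bitS (m \<oplus> d) (h \<otimes> P m \<oplus> r) \<longleftrightarrow> bitS d h"
proof -
  obtain q' r' where qr: "q' \<in> U" "r' \<in> U" "h = q' \<otimes> P d \<oplus> r'" "r' \<prec> P d"
    using div_ex[of "P d" h] P_pos d h by auto
  have "h \<otimes> P m \<oplus> r = (q' \<otimes> P d \<oplus> r') \<otimes> P m \<oplus> r" using qr by simp
  also have "\<dots> = q' \<otimes> (P d \<otimes> P m) \<oplus> (r' \<otimes> P m \<oplus> r)" using qr m d r by (simp add: distr2 mu_assoc ad_assoc)
  also have "\<dots> = q' \<otimes> P (m \<oplus> d) \<oplus> (r' \<otimes> P m \<oplus> r)" using qr m d r P_add[of m d] mu_comm[of "P d" "P m"] by simp
  finally have eq: "h \<otimes> P m \<oplus> r = q' \<otimes> P (m \<oplus> d) \<oplus> (r' \<otimes> P m \<oplus> r)" .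
  have R: "r' \<otimes> P m \<oplus> r \<prec> P (m \<oplus> d)"
    using rem_bound[of r' r "P m" "P d"] qr m d r rl P_add[of m d] mu_comm[of "P m" "P d"] by simp
  have "bitS (m \<oplus> d) (h \<otimes> P m \<oplus> r) \<longleftrightarrow> odd q'"
    unfolding eq using bit_char[OF qr(1) _ _ R] qr m d r by simp
  also have "\<dots> \<longleftrightarrow> bitS d h" using bit_char[of q' r' d] qr d by simp
  finally show ?thesis .
qed

lemma bit_low:
  assumes k: "k \<in> U" and d: "d \<in> U" and h: "h \<in> U" and r: "r \<in> U" and dp: "\<zero> \<prec> d"
  shows "bitS k (h \<otimes> P (k \<oplus> d) \<oplus> r) \<longleftrightarrow> bitS k r"
proof -
  obtain q r0 where qr: "q \<in> U" "r0 \<in> U" "r = q \<otimes> P k \<oplus> r0" "r0 \<prec> P k"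
    using div_ex[of "P k" r] P_pos k r by auto
  obtain d' where d': "d' \<in> U" "\<one> \<oplus> d' = d" using le_ex[of "\<one>" d] pos_ge1[OF d dp] d by auto
  have Pd: "P d = P d' \<oplus> P d'" using d' P_S[of d'] ad_comm[of "\<one>" d'] by simp
  define t where "t = h \<otimes> P d'"
  have t: "t \<in> U" using h d' by (simp add: t_def)
  have eq: "h \<otimes> P (k \<oplus> d) \<oplus> r = (t \<oplus> t \<oplus> q) \<otimes> P k \<oplus> r0"
    using qr k d h d' Pd by (simp add: t_def P_add distr distr2 ac)
  have "bitS k (h \<otimes> P (k \<oplus> d) \<oplus> r) \<longleftrightarrow> odd (t \<oplus> t \<oplus> q)"
    unfolding eq using bit_char qr t k by simp
  also have "\<dots> \<longleftrightarrow> odd q" using odd_tt t qr by simp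
  also have "\<dots> \<longleftrightarrow> bitS k r" using bit_char[of q r0 k] qr k by simp
  finally show ?thesis .
qed

lemma bit_add:
  assumes y: "y \<in> U" and al: "\<alpha> \<in> U" and nb: "\<not> bitS y \<alpha>" and k: "k \<in> U"
  shows "bitS k (\<alpha> \<oplus> P y) \<longleftrightarrow> bitS k \<alpha> \<or> k = y"
proof -
  obtain Q r where qr: "Q \<in> U" "r \<in> U" "\<alpha> = Q \<otimes> P y \<oplus> r" "r \<prec> P y"
    using div_ex[of "P y" \<alpha>] P_pos y al by auto
  have nQ: "\<not> odd Q" using nb bit_char[of Q r y] qr y by simp
  then obtain h where h: "h \<in> U" "Q = h \<oplus> h" using par_ex[of Q] qr unfolding odd_def by auto
  have e1: "\<alpha> = h \<otimes> P (y \<oplus> \<one>) \<oplus> r" using qr h y by (simp add: P_S distr distr2 ac)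
  have e2: "\<alpha> \<oplus> P y = h \<otimes> P (y \<oplus> \<one>) \<oplus> (r \<oplus> P y)" using qr h y by (simp add: P_S distr distr2 ac)
  have "\<alpha> \<oplus> P y = Q \<otimes> P y \<oplus> (r \<oplus> P y)" using qr y by (simp add: ad_assoc)
  also have "\<dots> = Q \<otimes> P y \<oplus> (P y \<oplus> r)" using qr y ad_comm[of r "P y"] by simp
  also have "\<dots> = (Q \<oplus> \<one>) \<otimes> P y \<oplus> r" using qr y by (simp add: distr2 mu_1l ad_assoc)
  finally have e3: "\<alpha> \<oplus> P y = (Q \<oplus> \<one>) \<otimes> P y \<oplus> r" .
  have rl: "r \<oplus> P y \<prec> P (y \<oplus> \<one>)" using qr y P_S ad_mono by simp
  have rl1: "r \<prec> P (y \<oplus> \<one>)" using qr y P_S lt_ad_pos[of "P y" "P y"] P_pos lt_trans[of r "P y" "P y \<oplus> P y"] by simp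
  consider "k = y" | "y \<prec> k" | "k \<prec> y" using trich k y by blast
  then show ?thesis
  proof cases
    case 1
    have "odd (Q \<oplus> \<one>)" using h unfolding odd_def by blast
    then show ?thesis using 1 e3 bit_char[of "Q \<oplus> \<one>" r y] qr y by simp
  next
    case 2
    then have "y \<oplus> \<one> \<preceq> k" using lt_iff_succ_le y k by simp
    then obtain d where d: "d \<in> U" "y \<oplus> \<one> \<oplus> d = k" using le_ex[of "y \<oplus> \<one>" k] y k by auto
    have "bitS k \<alpha> \<longleftrightarrow> bitS d h" using bit_high[of "y \<oplus> \<one>" d h r] d h qr y rl1 e1 by simp
    moreover have "bitS k (\<alpha> \<oplus> P y) \<longleftrightarrow> bitS d h"
      using bit_high[of "y \<oplus> \<one>" d h "r \<oplus> P y"] d h qr y rl e2 by simp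
    moreover have "k \<noteq> y" using 2 lt_irrefl y by auto
    ultimately show ?thesis by simp
  next
    case 3
    then obtain d where d: "d \<in> U" "k \<oplus> d = y" using sub_ex[of k y] y k by auto
    have dp: "\<zero> \<prec> d" using d 3 zero_le[of d] ad_0[of k] lt_irrefl[of k] k by auto
    have "bitS k \<alpha> \<longleftrightarrow> bitS k r" using bit_low[of k d Q r] d qr k dp by simp
    moreover have "bitS k (\<alpha> \<oplus> P y) \<longleftrightarrow> bitS k r" using bit_low[of k d "Q \<oplus> \<one>" r] d qr k dp e3 by simp
    moreover have "k \<noteq> y" using 3 lt_irrefl y by auto
    ultimately show ?thesis by simp
  qed
qed

lemma bit_add_bound:
  assumes y: "y \<in> U" and al: "\<alpha> \<in> U" and a: "a \<in> U" and nb: "\<not> bitS y \<alpha>"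
    and ya: "y \<prec> a" and alp: "\<alpha> \<prec> P a"
  shows "\<alpha> \<oplus> P y \<prec> P a"
proof -
  obtain Q r where qr: "Q \<in> U" "r \<in> U" "\<alpha> = Q \<otimes> P y \<oplus> r" "r \<prec> P y"
    using div_ex[of "P y" \<alpha>] P_pos y al by auto
  have nQ: "\<not> odd Q" using nb bit_char[of Q r y] qr y by simp
  then obtain h where h: "h \<in> U" "Q = h \<oplus> h" using par_ex[of Q] qr unfolding odd_def by auto
  have e1: "\<alpha> = h \<otimes> P (y \<oplus> \<one>) \<oplus> r" using qr h y by (simp add: P_S distr distr2 ac)
  have e2: "\<alpha> \<oplus> P y = h \<otimes> P (y \<oplus> \<one>) \<oplus> (r \<oplus> P y)" using qr h y by (simp add: P_S distr distr2 ac)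
  have rl: "r \<oplus> P y \<prec> P (y \<oplus> \<one>)" using qr y P_S ad_mono by simp
  have "y \<oplus> \<one> \<preceq> a" using lt_iff_succ_le y a ya by simp
  then obtain d where d: "d \<in> U" "y \<oplus> \<one> \<oplus> d = a" using le_ex[of "y \<oplus> \<one>" a] y a by auto
  have Pa: "P a = P d \<otimes> P (y \<oplus> \<one>)" using d y P_add[of "y \<oplus> \<one>" d] mu_comm by simp
  have "h \<otimes> P (y \<oplus> \<one>) \<preceq> \<alpha>" using e1 le_ad h y qr by simp
  then have "h \<otimes> P (y \<oplus> \<one>) \<prec> P d \<otimes> P (y \<oplus> \<one>)" using alp Pa le_lt_trans[of _ \<alpha> "P a"] h y al a d by simp
  then have "h \<prec> P d" using mu_lt_cancel[of h "P d" "P (y \<oplus> \<one>)"] h d y by simp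
  then show ?thesis using rem_bound[of h "r \<oplus> P y" "P (y \<oplus> \<one>)" "P d"] e2 Pa rl h d y qr by simp
qed


lemma sat_Bit:
  assumes e: "env S e"
  shows "sat S e (Bit E t1 t2) \<longleftrightarrow> bitS (evt S e t1) (evt S e t2)"
proof -
  define k where "k = evt S e t1"
  define N where "N = evt S e t2"
  have k: "k \<in> U" and N: "N \<in> U" using evt_U e by (auto simp: k_def N_def)
  have "sat S e (Bit E t1 t2) \<longleftrightarrow> (\<exists>z\<in>U. z \<prec> N \<oplus> \<one> \<and> expR k z \<and> (\<exists>q\<in>U. q \<prec> N \<oplus> \<one> \<and>
      (\<exists>r\<in>U. r \<prec> z \<and> N = q \<otimes> z \<oplus> r \<and> (\<exists>h\<in>U. h \<prec> N \<oplus> \<one> \<and> q = h \<oplus> h \<oplus> \<one>))))"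
    by (simp add: Bit_def sat_Ef k_def N_def)
  also have "\<dots> \<longleftrightarrow> bitS k N"
  proof
    assume "\<exists>z\<in>U. z \<prec> N \<oplus> \<one> \<and> expR k z \<and> (\<exists>q\<in>U. q \<prec> N \<oplus> \<one> \<and>
      (\<exists>r\<in>U. r \<prec> z \<and> N = q \<otimes> z \<oplus> r \<and> (\<exists>h\<in>U. h \<prec> N \<oplus> \<one> \<and> q = h \<oplus> h \<oplus> \<one>)))"
    then obtain z q r h where H: "z \<in> U" "expR k z" "q \<in> U" "r \<in> U" "r \<prec> z" "N = q \<otimes> z \<oplus> r"
      "h \<in> U" "q = h \<oplus> h \<oplus> \<one>" by blast
    have "z = P k" using H expR_eq k by simp
    then show "bitS k N" unfolding bitS_def odd_def using H by blast
  next
    assume "bitS k N"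
    then obtain q r h where H: "q \<in> U" "r \<in> U" "N = q \<otimes> P k \<oplus> r" "r \<prec> P k" "h \<in> U" "q = h \<oplus> h \<oplus> \<one>"
      unfolding bitS_def odd_def by blast
    have qp: "\<zero> \<prec> q" using odd_pos[of q] H unfolding odd_def by blast
    have Pq: "P k \<preceq> q \<otimes> P k" using le_mu_pos[of "P k" q] mu_comm[of q "P k"] H k qp by simp
    have qN: "q \<otimes> P k \<preceq> N" using H k le_ad by simp
    have PN: "P k \<preceq> N" using le_trans[OF _ _ _ Pq qN] H k N by simp
    have "q \<preceq> q \<otimes> P k" using le_mu_pos[of q "P k"] P_pos k H by simp
    then have qN': "q \<preceq> N" using le_trans[OF _ _ _ _ qN] H k N by simp
    have "h \<preceq> q" using H le_ad[of h "h \<oplus> \<one>"] ad_assoc[of h h "\<one>"] by simp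
    then have hN: "h \<preceq> N" using le_trans[OF _ _ _ _ qN'] H N by simp
    have a1: "P k \<prec> N \<oplus> \<one>" using lt_succ_iff[of "P k" N] PN k N by simp
    have a2: "q \<prec> N \<oplus> \<one>" using lt_succ_iff[of q N] qN' H N by simp
    have a3: "h \<prec> N \<oplus> \<one>" using lt_succ_iff[of h N] hN H N by simp
    show "\<exists>z\<in>U. z \<prec> N \<oplus> \<one> \<and> expR k z \<and> (\<exists>q\<in>U. q \<prec> N \<oplus> \<one> \<and>
      (\<exists>r\<in>U. r \<prec> z \<and> N = q \<otimes> z \<oplus> r \<and> (\<exists>h\<in>U. h \<prec> N \<oplus> \<one> \<and> q = h \<oplus> h \<oplus> \<one>)))"
      using H a1 a2 a3 expR_P[OF k] P_U[OF k] by blast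
  qed
  finally show ?thesis by (simp add: k_def N_def)
qed

definition nm :: "nat \<Rightarrow> 'a" where "nm n = evt S (\<lambda>_. \<zero>) (num n)"

lemma nm_simps: "nm 0 = \<zero>" "nm (Suc n) = nm n \<oplus> \<one>"
  by (simp_all add: nm_def)

lemma evt_num[simp]: "evt S e (num n) = nm n"
  by (induct n) (auto simp: nm_simps)

lemma nm_U[simp]: "nm n \<in> U"
  by (induct n) (auto simp: nm_simps)

lemma nm_lt: "i < j \<Longrightarrow> nm i \<prec> nm j"
proof (induct j)
  case 0 then show ?case by simp
next
  case (Suc j)
  have l: "nm j \<prec> nm (Suc j)" unfolding nm_simps by (rule lt_ad1) simp
  show ?case
  proof (cases "i = j")
    case True then show ?thesis using l by simp
  next
    case False
    then have "nm i \<prec> nm j" using Suc by simp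
    then show ?thesis using l lt_trans[of "nm i" "nm j" "nm (Suc j)"] by simp
  qed
qed

lemma nm_inj: "nm i = nm j \<Longrightarrow> i = j"
proof (rule ccontr)
  assume e: "nm i = nm j" and "i \<noteq> j"
  then consider "i < j" | "j < i" by linarith
  then show False
  proof cases
    case 1 then show False using nm_lt[of i j] e lt_irrefl[of "nm j"] by simp
  next
    case 2 then show False using nm_lt[of j i] e lt_irrefl[of "nm j"] by simp
  qed
qed

lemma nm_below: "x \<in> U \<Longrightarrow> x \<prec> nm j \<Longrightarrow> \<exists>i<j. x = nm i"
proof (induct j)
  case 0
  then have x: "x \<in> U" "x \<prec> \<zero>" by (simp_all add: nm_simps)
  have False
  proof (cases "\<zero> = x")
    case True then show False using x lt_irrefl[of x] by simp
  next
    case False then have "\<zero> \<prec> x" using zero_le[OF x(1)] by simp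
    then show False using x lt_asym[of x "\<zero>"] by simp
  qed
  then show ?case ..
next
  case (Suc j)
  have "x \<prec> nm j \<oplus> \<one>" using Suc(3) by (simp add: nm_simps)
  then have "x \<preceq> nm j" using lt_succ_iff[of x "nm j"] Suc(2) by simp
  then show ?case
  proof
    assume "x \<prec> nm j" then obtain i where "i < j" "x = nm i" using Suc(1,2) by blast
    then show ?case by (intro exI[of _ i]) simp
  next
    assume "x = nm j" then show ?case by blast
  qed
qed

lemma idx_inj:
  assumes U: "y \<in> U" "i \<in> U" "u \<in> U" "y' \<in> U" "i' \<in> U" "u' \<in> U" "J \<in> U" "a \<in> U"
    and lt: "y \<prec> a" "y' \<prec> a" "i \<prec> J" "i' \<prec> J"
    and eq: "(u \<otimes> J \<oplus> i) \<otimes> a \<oplus> y = (u' \<otimes> J \<oplus> i') \<otimes> a \<oplus> y'"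
  shows "y = y' \<and> i = i' \<and> u = u'"
proof -
  have 1: "u \<otimes> J \<oplus> i = u' \<otimes> J \<oplus> i' \<and> y = y'"
    by (rule div_uniq[of "u \<otimes> J \<oplus> i" y "u' \<otimes> J \<oplus> i'" y' a]) (use U lt eq in simp_all)
  have "u = u' \<and> i = i'"
    by (rule div_uniq[of u i u' i' J]) (use U lt 1 in simp_all)
  then show ?thesis using 1 by simp
qed

lemma idx_ge:
  assumes U: "y \<in> U" "i \<in> U" "u \<in> U" "J \<in> U" "a \<in> U" and p: "\<zero> \<prec> J" "\<zero> \<prec> a"
  shows "u \<preceq> (u \<otimes> J \<oplus> i) \<otimes> a \<oplus> y"
proof -
  have 1: "u \<preceq> u \<otimes> J" by (rule le_mu_pos) (use U p in simp_all)
  have 2: "u \<otimes> J \<preceq> u \<otimes> J \<oplus> i" by (rule le_ad) (use U in simp_all)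
  have 3: "u \<otimes> J \<oplus> i \<preceq> (u \<otimes> J \<oplus> i) \<otimes> a" by (rule le_mu_pos) (use U p in simp_all)
  have 4: "(u \<otimes> J \<oplus> i) \<otimes> a \<preceq> (u \<otimes> J \<oplus> i) \<otimes> a \<oplus> y" by (rule le_ad) (use U in simp_all)
  have 5: "u \<preceq> u \<otimes> J \<oplus> i" by (rule le_trans[OF _ _ _ 1 2]) (use U in simp_all)
  have 6: "u \<preceq> (u \<otimes> J \<oplus> i) \<otimes> a" by (rule le_trans[OF _ _ _ 5 3]) (use U in simp_all)
  show ?thesis by (rule le_trans[OF _ _ _ 6 4]) (use U in simp_all)
qed

end


definition numv :: "'a struc \<Rightarrow> nat \<Rightarrow> 'a" where "numv S n = evt S (\<lambda>_. zer S) (num n)"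

lemma evt_num_gen[simp]: "evt S e (num n) = numv S n"
  unfolding numv_def by (induct n) auto

lemma sat_Ef_gen: "sat S e (Ef E t1 t2) = sat S (evt S e t1 ## evt S e t2 ## (\<lambda>_. zer S)) E"
proof -
  have "(\<lambda>i. evt S e (if i = 0 then t1 else if i = 1 then t2 else Zero)) = evt S e t1 ## evt S e t2 ## (\<lambda>_. zer S)"
    by (rule ext) (simp add: cons_env_def split: nat.split)
  then show ?thesis by (simp add: Ef_def)
qed

definition bitF :: "'a struc \<Rightarrow> fm \<Rightarrow> 'a \<Rightarrow> 'a \<Rightarrow> bool" where
  "bitF S E k N = sat S (k ## N ## (\<lambda>_. zer S)) (Bit E (Var 0) (Var 1))"

lemma sat_Bit_gen: "sat S e (Bit E t1 t2) = bitF S E (evt S e t1) (evt S e t2)"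
  by (simp add: bitF_def Bit_def sat_Ef_gen)

definition idxT :: "nat \<Rightarrow> trm \<Rightarrow> trm \<Rightarrow> trm \<Rightarrow> trm \<Rightarrow> trm" where
  "idxT j u i y a = Plus (Times (Plus (Times u (num j)) i) a) y"

definition idxv :: "'a struc \<Rightarrow> nat \<Rightarrow> 'a \<Rightarrow> 'a \<Rightarrow> 'a \<Rightarrow> 'a \<Rightarrow> 'a" where
  "idxv S j u i y a = pl S (tm S (pl S (tm S u (numv S j)) i) a) y"

lemma evt_idxT[simp]: "evt S e (idxT j u i y a) = idxv S j (evt S e u) (evt S e i) (evt S e y) (evt S e a)"
  by (simp add: idxT_def idxv_def)

definition EGf :: "fm \<Rightarrow> nat \<Rightarrow> fm" where
  "EGf E j = conjs (map (\<lambda>i. Bit E (idxT j (Var i) (num i) (Var j) (Var (j + 4))) (Var (j + 1))) [0..<j])"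

definition EGs :: "'a struc \<Rightarrow> fm \<Rightarrow> nat \<Rightarrow> 'a list \<Rightarrow> 'a \<Rightarrow> 'a \<Rightarrow> 'a \<Rightarrow> bool" where
  "EGs S E j us y G a = (\<forall>i<j. bitF S E (idxv S j (us ! i) (numv S i) y a) G)"

lemma pre_at: "length us = m \<Longrightarrow> pre us e (m + k) = e k"
  using pre_beyond by blast

lemma pre_at0: "length us = m \<Longrightarrow> pre us e m = e 0"
  using pre_beyond[of us e 0] by simp

lemma pre_len0[simp]: "pre us e (length us) = e 0"
  using pre_beyond[of us e 0] by simp

lemma pre_len1[simp]: "pre us e (Suc (length us)) = e (Suc 0)"
  using pre_beyond[of us e 1] by simp

lemma pre_lenk[simp]: "pre us e (length us + k) = e k"
  using pre_beyond[of us e k] by simp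

lemma sat_EGf: "length us = j \<Longrightarrow> sat S (pre us (y ## G ## x ## \<alpha> ## a ## e)) (EGf E j) \<longleftrightarrow> EGs S E j us y G a"
  by (auto simp: EGf_def EGs_def sat_Bit_gen pre_at pre_at0 pre_nth)

lemma delta0_EGf[simp]: "delta0 (EGf E j) = (delta0 E \<or> j = 0)"
  by (auto simp: EGf_def)

definition C1f :: "fm \<Rightarrow> nat \<Rightarrow> fm" where
  "C1f E j = BAll (Var 3) (Disj (Neg (Bit E (Var 0) (Var 3))) (bexs j (Suc 0) (EGf E j)))"

definition C2f :: "fm \<Rightarrow> nat \<Rightarrow> fm" where
  "C2f E j = BAll (Var 3) (BAll (num j) (BAll (Var 2) (Disj (Neg (Bit E (idxT j (Var 0) (Var 1) (Var 2) (Var 6)) (Var 3)))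
      (Bit E (Var 2) (Var 5)))))"

definition rp :: "nat \<Rightarrow> nat \<Rightarrow> nat" where
  "rp j i = (if i < j then i else if i = j then j + 2 else if i = j + 1 then j else i + 3)"

definition C3f :: "fm \<Rightarrow> nat \<Rightarrow> fm \<Rightarrow> fm" where
  "C3f E j p = ball (Var 3) (balls j (Suc 0) (dj False (Neg (Conj (Bit E (Var j) (Var (j + 3))) (EGf E j))) (dual (ren (rp j) p))))"

definition rs :: "nat \<Rightarrow> nat" where
  "rs i = (if i = 0 then 2 else if i = 1 then 0 else i + 3)"

definition T1f :: "fm \<Rightarrow> fm \<Rightarrow> fm" where
  "T1f E \<sigma> = All (dj False (Neg (Lt (Var 0) (Var 4))) (dj False (dual (ren rs \<sigma>)) (Bit E (Var 0) (Var 3))))"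

lemma sat_bexs_EG: "sat S (y ## G ## x ## \<alpha> ## a ## e) (bexs j (Suc 0) (EGf E j)) \<longleftrightarrow>
     (\<exists>us. length us = j \<and> set us \<subseteq> univ S \<and> (\<forall>u\<in>set us. ls S u G) \<and> EGs S E j us y G a)"
proof -
  have "sat S (y ## G ## x ## \<alpha> ## a ## e) (bexs j (Suc 0) (EGf E j)) \<longleftrightarrow>
     (\<exists>us. length us = j \<and> set us \<subseteq> univ S \<and> (\<forall>u\<in>set us. ls S u G) \<and> sat S (pre us (y ## G ## x ## \<alpha> ## a ## e)) (EGf E j))"
    by (simp add: sat_bexs)
  also have "\<dots> \<longleftrightarrow> (\<exists>us. length us = j \<and> set us \<subseteq> univ S \<and> (\<forall>u\<in>set us. ls S u G) \<and> EGs S E j us y G a)"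
  proof
    assume "\<exists>us. length us = j \<and> set us \<subseteq> univ S \<and> (\<forall>u\<in>set us. ls S u G) \<and> sat S (pre us (y ## G ## x ## \<alpha> ## a ## e)) (EGf E j)"
    then obtain us where H: "length us = j" "set us \<subseteq> univ S" "\<forall>u\<in>set us. ls S u G" "sat S (pre us (y ## G ## x ## \<alpha> ## a ## e)) (EGf E j)" by blast
    have "EGs S E j us y G a" using H(4) sat_EGf[OF H(1)] by simp
    then show "\<exists>us. length us = j \<and> set us \<subseteq> univ S \<and> (\<forall>u\<in>set us. ls S u G) \<and> EGs S E j us y G a"
      using H by blast
  next
    assume "\<exists>us. length us = j \<and> set us \<subseteq> univ S \<and> (\<forall>u\<in>set us. ls S u G) \<and> EGs S E j us y G a"
    then obtain us where H: "length us = j" "set us \<subseteq> univ S" "\<forall>u\<in>set us. ls S u G" "EGs S E j us y G a" by blast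
    have "sat S (pre us (y ## G ## x ## \<alpha> ## a ## e)) (EGf E j)" using H(4) sat_EGf[OF H(1)] by simp
    then show "\<exists>us. length us = j \<and> set us \<subseteq> univ S \<and> (\<forall>u\<in>set us. ls S u G) \<and> sat S (pre us (y ## G ## x ## \<alpha> ## a ## e)) (EGf E j)"
      using H by blast
  qed
  finally show ?thesis .
qed

lemma sat_C1: "sat S (G ## x ## \<alpha> ## a ## e) (C1f E j) \<longleftrightarrow>
  (\<forall>y\<in>univ S. ls S y a \<longrightarrow> bitF S E y \<alpha> \<longrightarrow>
     (\<exists>us. length us = j \<and> set us \<subseteq> univ S \<and> (\<forall>u\<in>set us. ls S u G) \<and> EGs S E j us y G a))"
  unfolding C1f_def by (simp add: sat_Bit_gen sat_bexs_EG)

lemma sat_C2: "sat S (G ## x ## \<alpha> ## a ## e) (C2f E j) \<longleftrightarrow>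
  (\<forall>y\<in>univ S. ls S y a \<longrightarrow> (\<forall>i\<in>univ S. ls S i (numv S j) \<longrightarrow> (\<forall>u\<in>univ S. ls S u G \<longrightarrow>
     bitF S E (idxv S j u i y a) G \<longrightarrow> bitF S E y \<alpha>)))"
  by (auto simp: C2f_def sat_Bit_gen)

lemma rp_env: "length us = j \<Longrightarrow> pre us (y ## G ## x ## \<alpha> ## a ## e) \<circ> rp j = pre us (x ## y ## e)"
proof (rule ext)
  fix i assume l: "length us = j"
  consider "i < j" | "i = j" | "i = j + 1" | "j + 1 < i" by linarith
  then show "(pre us (y ## G ## x ## \<alpha> ## a ## e) \<circ> rp j) i = pre us (x ## y ## e) i"
  proof cases
    case 1 then show ?thesis using l by (simp add: rp_def pre_nth)
  next
    case 2 then show ?thesis using l pre_at[of us j _ 2] by (simp add: rp_def pre_at0)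
  next
    case 3 then show ?thesis using l pre_at[of us j _ 1] by (simp add: rp_def pre_at0)
  next
    case 4
    then obtain k where k: "i = j + 2 + k" by (metis add.assoc less_imp_add_positive one_add_one plus_1_eq_Suc Suc_leI le_add_diff_inverse)
    have "rp j i = j + (5 + k)" using 4 k by (simp add: rp_def)
    then show ?thesis using l k pre_at[of us j _ "5 + k"] pre_at[of us j _ "2 + k"]
      by (simp add: numeral_eq_Suc add.assoc)
  qed
qed

lemma sat_C3: "univ S \<noteq> {} \<Longrightarrow> sat S (G ## x ## \<alpha> ## a ## e) (C3f E j p) \<longleftrightarrow>
  (\<forall>y\<in>univ S. ls S y a \<longrightarrow> (\<forall>us. length us = j \<longrightarrow> set us \<subseteq> univ S \<longrightarrow> (\<forall>u\<in>set us. ls S u G) \<longrightarrow>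
     bitF S E y \<alpha> \<longrightarrow> EGs S E j us y G a \<longrightarrow> \<not> sat S (pre us (x ## y ## e)) p))"
  by (auto simp: C3f_def sat_ball sat_balls sat_dj sat_Bit_gen sat_EGf rp_env pre_at pre_at0)

lemma rs_env: "(y ## G ## x ## \<alpha> ## a ## e) \<circ> rs = x ## y ## e"
  by (rule ext) (simp add: rs_def cons_env_def split: nat.split)

lemma sat_T1: "univ S \<noteq> {} \<Longrightarrow> sat S (G ## x ## \<alpha> ## a ## e) (T1f E \<sigma>) \<longleftrightarrow>
  (\<forall>y\<in>univ S. ls S y a \<longrightarrow> sat S (x ## y ## e) \<sigma> \<longrightarrow> bitF S E y \<alpha>)"
  by (auto simp: T1f_def sat_dj sat_Bit_gen rs_env)


definition Core :: "fm \<Rightarrow> nat \<Rightarrow> fm \<Rightarrow> fm" where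
  "Core E j p = cj False (C1f E j) (cj False (C2f E j) (C3f E j p))"

definition ThC :: "fm \<Rightarrow> nat \<Rightarrow> fm \<Rightarrow> fm \<Rightarrow> fm" where
  "ThC E j \<sigma> p = cj False (T1f E \<sigma>) (cj False (C1f E j) (C3f E j p))"

definition Theta :: "fm \<Rightarrow> nat \<Rightarrow> fm \<Rightarrow> fm \<Rightarrow> fm" where
  "Theta E j \<sigma> p = Ex (Ex (ThC E j \<sigma> p))"

definition rI :: "nat \<Rightarrow> nat" where
  "rI i = (if i = 0 then 0 else if i = 1 then 3 else if i = 2 then 1 else if i = 3 then 4 else i + 2)"

definition Df :: fm where
  "Df = Conj (Disj (Lt (Var 1) (Var 0)) (Eq (Var 1) (Var 0))) (Lt (Var 0) (Var 4))"

definition If :: "fm \<Rightarrow> nat \<Rightarrow> fm \<Rightarrow> fm" where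
  "If E j p = Ex (cj True Df (Ex (ren rI (Core E j p))))"

definition r2 :: "nat \<Rightarrow> nat" where
  "r2 i = (if i = 0 then 0 else if i = 1 then 2 else i + 1)"

definition Ff :: "fm \<Rightarrow> fm \<Rightarrow> fm" where
  "Ff \<sigma> \<pi> = Ex (cj True (Lt (Var 1) (Var 0)) (cj True (ren r2 \<sigma>) (ren r2 \<pi>)))"

lemma sat_Core: "univ S \<noteq> {} \<Longrightarrow> sat S (G ## x ## \<alpha> ## a ## e) (Core E j p) \<longleftrightarrow>
   sat S (G ## x ## \<alpha> ## a ## e) (C1f E j) \<and> sat S (G ## x ## \<alpha> ## a ## e) (C2f E j) \<and>
   sat S (G ## x ## \<alpha> ## a ## e) (C3f E j p)"
  by (simp add: Core_def sat_cj)

lemma sat_ThC: "univ S \<noteq> {} \<Longrightarrow> sat S (G ## x ## \<alpha> ## a ## e) (ThC E j \<sigma> p) \<longleftrightarrow>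
   sat S (G ## x ## \<alpha> ## a ## e) (T1f E \<sigma>) \<and> sat S (G ## x ## \<alpha> ## a ## e) (C1f E j) \<and>
   sat S (G ## x ## \<alpha> ## a ## e) (C3f E j p)"
  by (simp add: ThC_def sat_cj)

lemma sat_Theta: "sat S (\<alpha> ## a ## e) (Theta E j \<sigma> p) \<longleftrightarrow>
   (\<exists>x\<in>univ S. \<exists>G\<in>univ S. sat S (G ## x ## \<alpha> ## a ## e) (ThC E j \<sigma> p))"
  by (simp add: Theta_def)

lemma rI_env: "(G ## \<alpha> ## t ## x ## a ## N ## e) \<circ> rI = G ## x ## \<alpha> ## a ## e"
  by (rule ext) (simp add: rI_def cons_env_def split: nat.split)

lemma sat_If: "univ S \<noteq> {} \<Longrightarrow> sat S (t ## x ## a ## N ## e) (If E j p) \<longleftrightarrow>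
   (\<exists>\<alpha>\<in>univ S. (ls S t \<alpha> \<or> t = \<alpha>) \<and> ls S \<alpha> N \<and> (\<exists>G\<in>univ S. sat S (G ## x ## \<alpha> ## a ## e) (Core E j p)))"
  by (simp add: If_def sat_cj Df_def rI_env)

lemma r2_env: "(x ## b ## y ## e) \<circ> r2 = x ## y ## e"
  by (rule ext) (simp add: r2_def cons_env_def split: nat.split)

lemma sat_Ff: "univ S \<noteq> {} \<Longrightarrow> sat S (b ## y ## e) (Ff \<sigma> \<pi>) \<longleftrightarrow>
   (\<exists>x\<in>univ S. ls S b x \<and> sat S (x ## y ## e) \<sigma> \<and> sat S (x ## y ## e) \<pi>)"
  by (simp add: Ff_def sat_cj r2_env)

lemma delta0_C1: "delta0 E \<Longrightarrow> delta0 (C1f E j)" by (simp add: C1f_def)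
lemma delta0_C2: "delta0 E \<Longrightarrow> delta0 (C2f E j)" by (simp add: C2f_def)

lemma pi_C3: "delta0 E \<Longrightarrow> sigma n p \<Longrightarrow> pi n (C3f E j p)"
  unfolding C3f_def
  by (intro pi_ball pi_balls dj_pi delta0_pi dual_sp sigma_pi_ren) simp_all

lemma pi_Core: "delta0 E \<Longrightarrow> sigma n p \<Longrightarrow> pi n (Core E j p)"
  unfolding Core_def by (intro cj_pi delta0_pi delta0_C1 delta0_C2 pi_C3)

lemma pi_T1: "delta0 E \<Longrightarrow> sigma (Suc n) \<sigma> \<Longrightarrow> pi (Suc n) (T1f E \<sigma>)"
  unfolding T1f_def by (intro sigma_pi.pAll dj_pi delta0_pi dual_sp sigma_pi_ren) simp_all

lemma pi_ThC: "delta0 E \<Longrightarrow> sigma (Suc n) \<sigma> \<Longrightarrow> sigma n p \<Longrightarrow> pi (Suc n) (ThC E j \<sigma> p)"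
  unfolding ThC_def by (intro cj_pi pi_T1 delta0_pi delta0_C1 sigma_pi_mono(2) pi_C3)

lemma sigma_Theta: "delta0 E \<Longrightarrow> sigma (Suc n) \<sigma> \<Longrightarrow> sigma n p \<Longrightarrow> sigma (Suc (Suc n)) (Theta E j \<sigma> p)"
proof -
  assume a: "delta0 E" "sigma (Suc n) \<sigma>" "sigma n p"
  have "sigma (Suc (Suc n)) (ThC E j \<sigma> p)" by (rule sigma_pi.sS) (rule pi_ThC[OF a])
  then have "sigma (Suc (Suc n)) (Ex (ThC E j \<sigma> p))" by (rule sigma_pi.sEx)
  then show ?thesis unfolding Theta_def by (rule sigma_pi.sEx)
qed

lemma sigma_If: "delta0 E \<Longrightarrow> sigma n p \<Longrightarrow> sigma (Suc n) (If E j p)"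
proof -
  assume a: "delta0 E" "sigma n p"
  have "pi n (ren rI (Core E j p))" by (rule sigma_pi_ren(2)[OF pi_Core[OF a]])
  then have "sigma (Suc n) (ren rI (Core E j p))" by (rule sigma_pi.sS)
  then have 1: "sigma (Suc n) (Ex (ren rI (Core E j p)))" by (rule sigma_pi.sEx)
  have 2: "sigma (Suc n) Df" by (rule delta0_sigma) (simp add: Df_def)
  have "sigma (Suc n) (cj True Df (Ex (ren rI (Core E j p))))" by (rule cj_sigma[OF 2 1])
  then show ?thesis unfolding If_def by (rule sigma_pi.sEx)
qed

lemma sigma_Ff: "sigma (Suc n) \<sigma> \<Longrightarrow> pi (Suc n) \<pi> \<Longrightarrow> sigma (Suc (Suc n)) (Ff \<sigma> \<pi>)"
proof -
  assume a: "sigma (Suc n) \<sigma>" "pi (Suc n) \<pi>"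
  have 1: "sigma (Suc (Suc n)) (ren r2 \<sigma>)" by (rule sigma_pi_mono(1)[OF sigma_pi_ren(1)[OF a(1)]])
  have 2: "sigma (Suc (Suc n)) (ren r2 \<pi>)" by (rule sigma_pi.sS[OF sigma_pi_ren(2)[OF a(2)]])
  have 3: "sigma (Suc (Suc n)) (Lt (Var 1) (Var 0))" by (rule delta0_sigma) simp
  have "sigma (Suc (Suc n)) (cj True (Lt (Var 1) (Var 0)) (cj True (ren r2 \<sigma>) (ren r2 \<pi>)))"
    by (rule cj_sigma[OF 3 cj_sigma[OF 1 2]])
  then show ?thesis unfolding Ff_def by (rule sigma_pi.sEx)
qed


context ari
begin

declare evt_num[simp del]

lemma nm_numv[simp]: "nm n = numv S n"
  unfolding nm_def numv_def by (rule refl)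

lemma univ_ne: "U \<noteq> {}" using z_U by blast

lemma bitF_eq: "k \<in> U \<Longrightarrow> N \<in> U \<Longrightarrow> bitF S E k N \<longleftrightarrow> bitS k N"
proof -
  assume k: "k \<in> U" and N: "N \<in> U"
  have env: "env S (k ## N ## (\<lambda>_. \<zero>))" using k N by (intro env_cons env_z)
  show ?thesis using sat_Bit[OF env, of "Var 0" "Var 1"] by (simp add: bitF_def)
qed

definition addb :: "'a \<Rightarrow> 'a list \<Rightarrow> 'a" where
  "addb G ks = foldl (\<lambda>g k. g \<oplus> P k) G ks"

lemma addb_props:
  "G \<in> U \<Longrightarrow> set ks \<subseteq> U \<Longrightarrow> distinct ks \<Longrightarrow> (\<forall>k\<in>set ks. \<not> bitS k G) \<Longrightarrow>
   addb G ks \<in> U \<and> G \<preceq> addb G ks \<and> (\<forall>k'\<in>U. bitS k' (addb G ks) \<longleftrightarrow> bitS k' G \<or> k' \<in> set ks)"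
proof (induct ks arbitrary: G)
  case Nil then show ?case by (simp add: addb_def)
next
  case (Cons k ks)
  define G1 where "G1 = G \<oplus> P k"
  have k: "k \<in> U" and G1: "G1 \<in> U" using Cons by (auto simp: G1_def)
  have nb: "\<not> bitS k G" using Cons by simp
  have b1: "\<forall>k'\<in>U. bitS k' G1 \<longleftrightarrow> bitS k' G \<or> k' = k"
    using bit_add[OF k Cons(2) nb] by (simp add: G1_def)
  have le1: "G \<preceq> G1" using le_ad[of G "P k"] k Cons(2) by (simp add: G1_def)
  have fr: "\<forall>k'\<in>set ks. \<not> bitS k' G1" using Cons b1 by auto
  have IH: "addb G1 ks \<in> U \<and> G1 \<preceq> addb G1 ks \<and> (\<forall>k'\<in>U. bitS k' (addb G1 ks) \<longleftrightarrow> bitS k' G1 \<or> k' \<in> set ks)"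
    using Cons(1)[OF G1 _ _ fr] Cons(3,4) by simp
  have eq: "addb G (k # ks) = addb G1 ks" by (simp add: addb_def G1_def)
  show ?case unfolding eq using IH b1 le1 le_trans[of G G1 "addb G1 ks"] Cons(2) G1 by auto
qed


lemma numv_0[simp]: "numv S 0 = \<zero>" by (simp add: numv_def)

lemma numv_U[simp]: "numv S n \<in> U"
  using nm_U[of n] by simp

lemma idxv_U[simp]: "u \<in> U \<Longrightarrow> i \<in> U \<Longrightarrow> y \<in> U \<Longrightarrow> a \<in> U \<Longrightarrow> idxv S j u i y a \<in> U"
  by (simp add: idxv_def numv_def[symmetric])

lemma nth_U: "set us \<subseteq> U \<Longrightarrow> i < length us \<Longrightarrow> us ! i \<in> U"
  by (meson nth_mem subsetD)

definition EGK :: "nat \<Rightarrow> 'a \<Rightarrow> 'a list \<Rightarrow> 'a \<Rightarrow> 'a \<Rightarrow> bool" where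
  "EGK j a us y G = (\<forall>i<j. bitS (idxv S j (us ! i) (numv S i) y a) G)"

lemma EGs_K: "length us = j \<Longrightarrow> set us \<subseteq> U \<Longrightarrow> y \<in> U \<Longrightarrow> G \<in> U \<Longrightarrow> a \<in> U \<Longrightarrow>
  EGs S E j us y G a \<longleftrightarrow> EGK j a us y G"
  unfolding EGs_def EGK_def
proof (intro all_cong imp_cong refl)
  fix i assume "length us = j" "set us \<subseteq> U" "y \<in> U" "G \<in> U" "a \<in> U" "i < j"
  then have "us ! i \<in> U" using nth_U by simp
  then show "bitF S E (idxv S j (us ! i) (numv S i) y a) G = bitS (idxv S j (us ! i) (numv S i) y a) G"
    using bitF_eq \<open>y \<in> U\<close> \<open>G \<in> U\<close> \<open>a \<in> U\<close> by simp
qed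

lemma C1_K:
  assumes "\<alpha> \<in> U" "G \<in> U" "a \<in> U"
  shows "sat S (G ## x ## \<alpha> ## a ## e) (C1f E j) \<longleftrightarrow> (\<forall>y\<in>U. y \<prec> a \<longrightarrow> bitS y \<alpha> \<longrightarrow>
     (\<exists>us. length us = j \<and> set us \<subseteq> U \<and> (\<forall>u\<in>set us. u \<prec> G) \<and> EGK j a us y G))"
  unfolding sat_C1
proof (intro ball_cong imp_cong refl)
  fix y assume y: "y \<in> U"
  show "bitF S E y \<alpha> = bitS y \<alpha>" using bitF_eq y assms by simp
  show "(\<exists>us. length us = j \<and> set us \<subseteq> U \<and> (\<forall>u\<in>set us. u \<prec> G) \<and> EGs S E j us y G a) =
        (\<exists>us. length us = j \<and> set us \<subseteq> U \<and> (\<forall>u\<in>set us. u \<prec> G) \<and> EGK j a us y G)"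
    using EGs_K y assms by blast
qed

lemma C2_K:
  assumes "\<alpha> \<in> U" "G \<in> U" "a \<in> U"
  shows "sat S (G ## x ## \<alpha> ## a ## e) (C2f E j) \<longleftrightarrow> (\<forall>y\<in>U. y \<prec> a \<longrightarrow> (\<forall>i\<in>U. i \<prec> numv S j \<longrightarrow>
     (\<forall>u\<in>U. u \<prec> G \<longrightarrow> bitS (idxv S j u i y a) G \<longrightarrow> bitS y \<alpha>)))"
  unfolding sat_C2 using bitF_eq assms by simp

lemma C3_K:
  assumes "\<alpha> \<in> U" "G \<in> U" "a \<in> U"
  shows "sat S (G ## x ## \<alpha> ## a ## e) (C3f E j p) \<longleftrightarrow> (\<forall>y\<in>U. y \<prec> a \<longrightarrow> (\<forall>us. length us = j \<longrightarrow>
     set us \<subseteq> U \<longrightarrow> (\<forall>u\<in>set us. u \<prec> G) \<longrightarrow> bitS y \<alpha> \<longrightarrow> EGK j a us y G \<longrightarrow> \<not> sat S (pre us (x ## y ## e)) p))"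
  unfolding sat_C3[OF univ_ne]
proof (intro ball_cong imp_cong refl all_cong)
  fix y us assume "y \<in> U" "length us = j" "set us \<subseteq> U"
  then show "bitF S E y \<alpha> = bitS y \<alpha>" "EGs S E j us y G a = EGK j a us y G"
    using bitF_eq EGs_K assms by simp_all
qed


lemma addA:
  assumes e: "env S e" and c: "c \<in> U" and a: "a \<in> U" and al: "\<alpha> \<in> U" and G: "G \<in> U"
    and alN: "\<alpha> \<prec> P a"
    and core: "sat S (G ## c ## \<alpha> ## a ## e) (Core E j p)"
    and y0: "y0 \<in> U" "y0 \<prec> a" "\<not> bitS y0 \<alpha>"
    and us0: "length us0 = j" "set us0 \<subseteq> U" "\<not> sat S (pre us0 (c ## y0 ## e)) p"
  shows "\<exists>\<alpha>'\<in>U. \<alpha> \<prec> \<alpha>' \<and> \<alpha>' \<prec> P a \<and> (\<exists>G'\<in>U. sat S (G' ## c ## \<alpha>' ## a ## e) (Core E j p))"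
proof -
  have cs: "sat S (G ## c ## \<alpha> ## a ## e) (C1f E j)" "sat S (G ## c ## \<alpha> ## a ## e) (C2f E j)"
     "sat S (G ## c ## \<alpha> ## a ## e) (C3f E j p)"
    using core sat_Core[OF univ_ne] by simp_all
  have C1: "\<forall>y\<in>U. y \<prec> a \<longrightarrow> bitS y \<alpha> \<longrightarrow>
     (\<exists>us. length us = j \<and> set us \<subseteq> U \<and> (\<forall>u\<in>set us. u \<prec> G) \<and> EGK j a us y G)"
    using cs(1) C1_K[OF al G a] by simp
  have C2: "\<forall>y\<in>U. y \<prec> a \<longrightarrow> (\<forall>i\<in>U. i \<prec> numv S j \<longrightarrow>
     (\<forall>u\<in>U. u \<prec> G \<longrightarrow> bitS (idxv S j u i y a) G \<longrightarrow> bitS y \<alpha>))"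
    using cs(2) C2_K[OF al G a] by simp
  have C3: "\<forall>y\<in>U. y \<prec> a \<longrightarrow> (\<forall>us. length us = j \<longrightarrow>
     set us \<subseteq> U \<longrightarrow> (\<forall>u\<in>set us. u \<prec> G) \<longrightarrow> bitS y \<alpha> \<longrightarrow> EGK j a us y G \<longrightarrow> \<not> sat S (pre us (c ## y ## e)) p)"
    using cs(3) C3_K[OF al G a] by simp
  define J where "J = numv S j"
  have JU: "J \<in> U" by (simp add: J_def)
  have ix: "idxv S j u i y a = (u \<otimes> J \<oplus> i) \<otimes> a \<oplus> y" for u i y by (simp add: idxv_def J_def)
  have apos: "\<zero> \<prec> a"
  proof (cases "\<zero> = y0")
    case True then show ?thesis using y0 by simp
  next
    case False then have "\<zero> \<prec> y0" using zero_le[OF y0(1)] by simp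
    then show ?thesis using lt_trans[of "\<zero>" y0 a] y0 a by simp
  qed
  have nmJ: "i < j \<Longrightarrow> numv S i \<prec> J" for i using nm_lt[of i j] by (simp add: J_def)
  have Jpos: "i < j \<Longrightarrow> \<zero> \<prec> J" for i using nm_lt[of 0 j] by (simp add: J_def nm_simps)
  have Jpos2: "i \<in> U \<Longrightarrow> i \<prec> J \<Longrightarrow> \<zero> \<prec> J" for i
  proof -
    assume i: "i \<in> U" "i \<prec> J"
    show "\<zero> \<prec> J"
    proof (cases "\<zero> = i")
      case True then show ?thesis using i by simp
    next
      case False then have "\<zero> \<prec> i" using zero_le[OF i(1)] by simp
      then show ?thesis using lt_trans[of "\<zero>" i J] i JU by simp
    qed
  qed
  have inj: "y = y' \<and> i = i' \<and> u = u'"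
    if "u \<in> U" "i \<in> U" "y \<in> U" "u' \<in> U" "i' \<in> U" "y' \<in> U" "y \<prec> a" "y' \<prec> a" "i \<prec> J" "i' \<prec> J"
       "idxv S j u i y a = idxv S j u' i' y' a" for u i y u' i' y'
    using idx_inj[of y i u y' i' u' J a] that JU a by (simp add: ix)
  have ltG: "u \<prec> H"
    if "u \<in> U" "i \<in> U" "y \<in> U" "H \<in> U" "\<zero> \<prec> J" "bitS (idxv S j u i y a) H" for u i y H
  proof -
    have "u \<preceq> idxv S j u i y a" using idx_ge[of y i u J a] that JU a apos by (simp add: ix)
    moreover have "idxv S j u i y a \<prec> H" using bit_lt that a by simp
    ultimately show ?thesis using le_lt_trans[of u "idxv S j u i y a" H] that a by simp
  qed
  define f where "f i = idxv S j (us0 ! i) (numv S i) y0 a" for i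
  define ks where "ks = map f [0..<j]"
  have us0U: "i < j \<Longrightarrow> us0 ! i \<in> U" for i using nth_U us0 by simp
  have fU: "i < j \<Longrightarrow> f i \<in> U" for i using us0U y0 a by (simp add: f_def)
  have ksU: "set ks \<subseteq> U" using fU by (auto simp: ks_def)
  have ksd: "distinct ks" unfolding ks_def distinct_map
  proof
    show "inj_on f (set [0..<j])"
    proof (rule inj_onI)
      fix i i' assume "i \<in> set [0..<j]" "i' \<in> set [0..<j]" "f i = f i'"
      then have ii: "i < j" "i' < j" "f i = f i'" by auto
      then have "numv S i = numv S i'" using inj[of "us0 ! i" "numv S i" y0 "us0 ! i'" "numv S i'" y0]
        us0U y0 nmJ by (simp add: f_def)
      then show "i = i'" using nm_inj[of i i'] by simp
    qed
  qed simp
  have ksf: "\<forall>k\<in>set ks. \<not> bitS k G"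
  proof
    fix k assume "k \<in> set ks"
    then obtain i where i: "i < j" "k = f i" by (auto simp: ks_def)
    show "\<not> bitS k G"
    proof
      assume b: "bitS k G"
      then have "us0 ! i \<prec> G" using ltG[of "us0 ! i" "numv S i" y0 G] i us0U y0 G Jpos by (simp add: f_def)
      then have "bitS y0 \<alpha>" using C2[rule_format, of y0 "numv S i" "us0 ! i"] y0 nmJ[OF i(1)] us0U[OF i(1)] b i
        by (simp add: f_def J_def)
      then show False using y0 by simp
    qed
  qed
  define G' where "G' = addb G ks"
  have AP: "G' \<in> U \<and> G \<preceq> G' \<and> (\<forall>k'\<in>U. bitS k' G' \<longleftrightarrow> bitS k' G \<or> k' \<in> set ks)"
    using addb_props[OF G ksU ksd ksf] by (simp add: G'_def)
  have G'U: "G' \<in> U" and GG': "G \<preceq> G'" and bG': "\<And>k'. k' \<in> U \<Longrightarrow> bitS k' G' \<longleftrightarrow> bitS k' G \<or> k' \<in> set ks"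
    using AP by auto
  define \<alpha>' where "\<alpha>' = \<alpha> \<oplus> P y0"
  have a'U: "\<alpha>' \<in> U" using al y0 by (simp add: \<alpha>'_def)
  have aa': "\<alpha> \<prec> \<alpha>'" using lt_ad_pos[of \<alpha> "P y0"] P_pos[of y0] al y0 by (simp add: \<alpha>'_def)
  have a'N: "\<alpha>' \<prec> P a" using bit_add_bound[OF y0(1) al a y0(3) y0(2) alN] by (simp add: \<alpha>'_def)
  have ba': "\<And>k. k \<in> U \<Longrightarrow> bitS k \<alpha>' \<longleftrightarrow> bitS k \<alpha> \<or> k = y0"
    using bit_add[OF y0(1) al y0(3)] by (simp add: \<alpha>'_def)
  have inks: "k \<in> set ks \<longleftrightarrow> (\<exists>i<j. k = f i)" for k by (auto simp: ks_def)
  have C1': "\<forall>y\<in>U. y \<prec> a \<longrightarrow> bitS y \<alpha>' \<longrightarrow>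
     (\<exists>us. length us = j \<and> set us \<subseteq> U \<and> (\<forall>u\<in>set us. u \<prec> G') \<and> EGK j a us y G')"
  proof (intro ballI impI)
    fix y assume y: "y \<in> U" "y \<prec> a" "bitS y \<alpha>'"
    show "\<exists>us. length us = j \<and> set us \<subseteq> U \<and> (\<forall>u\<in>set us. u \<prec> G') \<and> EGK j a us y G'"
    proof (cases "y = y0")
      case True
      have bf: "i < j \<Longrightarrow> bitS (f i) G'" for i using bG'[OF fU] inks by blast
      have "\<forall>u\<in>set us0. u \<prec> G'"
      proof
        fix u assume "u \<in> set us0"
        then obtain i where i: "i < j" "u = us0 ! i" using us0 by (auto simp: in_set_conv_nth)
        then show "u \<prec> G'" using ltG[of u "numv S i" y0 G'] bf[OF i(1)] us0U y0 G'U Jpos by (simp add: f_def)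
      qed
      moreover have "EGK j a us0 y G'" using bf True by (simp add: EGK_def f_def)
      ultimately show ?thesis using us0 by blast
    next
      case False
      then have "bitS y \<alpha>" using ba' y by simp
      then obtain us where us: "length us = j" "set us \<subseteq> U" "\<forall>u\<in>set us. u \<prec> G" "EGK j a us y G"
        using C1 y by blast
      have "\<forall>u\<in>set us. u \<prec> G'" using us(2,3) GG' lt_le_trans G G'U by blast
      moreover have "EGK j a us y G'" using us(4) bG' nth_U[OF us(2)] us(1) y a
        unfolding EGK_def by simp
      ultimately show ?thesis using us by blast
    qed
  qed
  have C2': "\<forall>y\<in>U. y \<prec> a \<longrightarrow> (\<forall>i\<in>U. i \<prec> numv S j \<longrightarrow>
     (\<forall>u\<in>U. u \<prec> G' \<longrightarrow> bitS (idxv S j u i y a) G' \<longrightarrow> bitS y \<alpha>'))"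
  proof (intro ballI impI)
    fix y i u assume y: "y \<in> U" "y \<prec> a" and i: "i \<in> U" "i \<prec> numv S j" and u: "u \<in> U" "u \<prec> G'"
      and b: "bitS (idxv S j u i y a) G'"
    have iJ: "i \<prec> J" using i by (simp add: J_def)
    have "bitS (idxv S j u i y a) G \<or> idxv S j u i y a \<in> set ks" using bG' b u i y a by simp
    then show "bitS y \<alpha>'"
    proof
      assume b0: "bitS (idxv S j u i y a) G"
      then have "u \<prec> G" using ltG[of u i y G] u i y G Jpos2[OF i(1) iJ] by simp
      then have "bitS y \<alpha>" using C2[rule_format, of y i u] y i u b0 by simp
      then show ?thesis using ba' y by simp
    next
      assume "idxv S j u i y a \<in> set ks"
      then obtain i' where i': "i' < j" "idxv S j u i y a = f i'" using inks by blast
      then have "y = y0" using inj[of u i y "us0 ! i'" "numv S i'" y0] u i y us0U y0 iJ nmJ by (simp add: f_def)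
      then show ?thesis using ba' y by simp
    qed
  qed
  have C3': "\<forall>y\<in>U. y \<prec> a \<longrightarrow> (\<forall>us. length us = j \<longrightarrow>
     set us \<subseteq> U \<longrightarrow> (\<forall>u\<in>set us. u \<prec> G') \<longrightarrow> bitS y \<alpha>' \<longrightarrow> EGK j a us y G' \<longrightarrow> \<not> sat S (pre us (c ## y ## e)) p)"
  proof (intro ballI impI allI)
    fix y us assume y: "y \<in> U" "y \<prec> a" and us: "length us = j" "set us \<subseteq> U" "\<forall>u\<in>set us. u \<prec> G'"
      and by': "bitS y \<alpha>'" and eg: "EGK j a us y G'"
    have usU: "i < j \<Longrightarrow> us ! i \<in> U" for i using nth_U us by simp
    have bi: "i < j \<Longrightarrow> bitS (idxv S j (us ! i) (numv S i) y a) G \<or> (\<exists>i'<j. idxv S j (us ! i) (numv S i) y a = f i')" for i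
      using eg bG' usU y a inks unfolding EGK_def by simp
    show "\<not> sat S (pre us (c ## y ## e)) p"
    proof (cases "y = y0")
      case False
      then have bya: "bitS y \<alpha>" using ba' y by' by simp
      have g: "i < j \<Longrightarrow> bitS (idxv S j (us ! i) (numv S i) y a) G" for i
      proof -
        assume i: "i < j"
        { fix i' assume i': "i' < j" "idxv S j (us ! i) (numv S i) y a = f i'"
          then have "y = y0" using inj[of "us ! i" "numv S i" y "us0 ! i'" "numv S i'" y0] usU[OF i] y us0U y0 nmJ i
            by (simp add: f_def)
          then have False using False by simp }
        then show ?thesis using bi[OF i] by blast
      qed
      have "EGK j a us y G" using g by (simp add: EGK_def)
      moreover have "\<forall>u\<in>set us. u \<prec> G"
      proof
        fix u assume "u \<in> set us"
        then obtain i where i: "i < j" "u = us ! i" using us by (auto simp: in_set_conv_nth)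
        then show "u \<prec> G" using ltG[of u "numv S i" y G] g[OF i(1)] usU y G Jpos by simp
      qed
      ultimately show ?thesis using C3 y us bya by blast
    next
      case True
      have "us ! i = us0 ! i" if i: "i < j" for i
      proof -
        have nG: "\<not> bitS (idxv S j (us ! i) (numv S i) y0 a) G"
        proof
          assume b0: "bitS (idxv S j (us ! i) (numv S i) y0 a) G"
          then have "us ! i \<prec> G" using ltG[of "us ! i" "numv S i" y0 G] usU[OF i] y0 G Jpos[OF i] by simp
          then have "bitS y0 \<alpha>" using C2[rule_format, of y0 "numv S i" "us ! i"] y0 nmJ[OF i] usU[OF i] b0 by (simp add: J_def)
          then show False using y0 by simp
        qed
        then obtain i' where i': "i' < j" "idxv S j (us ! i) (numv S i) y0 a = f i'" using bi[OF i] True by auto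
        then have "numv S i = numv S i' \<and> us ! i = us0 ! i'"
          using inj[of "us ! i" "numv S i" y0 "us0 ! i'" "numv S i'" y0] usU[OF i] us0U y0 nmJ i by (simp add: f_def)
        moreover then have "i = i'" using nm_inj[of i i'] by simp
        ultimately show ?thesis by simp
      qed
      then have "us = us0" using us(1) us0(1) by (intro nth_equalityI) auto
      then show ?thesis using True us0 by simp
    qed
  qed
  have "sat S (G' ## c ## \<alpha>' ## a ## e) (Core E j p)"
    using C1' C2' C3' C1_K[OF a'U G'U a] C2_K[OF a'U G'U a] C3_K[OF a'U G'U a] sat_Core[OF univ_ne] by simp
  then show ?thesis using a'U aa' a'N G'U by blast
qed

end


context pa
begin

lemma max_principle:
  assumes MI: "M_induction k M S" and sf: "sigma k f" and e: "env S e"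
    and N: "N \<in> univ M" "N \<in> U"
    and sem: "\<And>t. t \<in> U \<Longrightarrow> sat S (t ## e) f \<longleftrightarrow> (\<exists>\<alpha>\<in>U. (t \<prec> \<alpha> \<or> t = \<alpha>) \<and> \<alpha> \<prec> N \<and> Q \<alpha>)"
    and q0: "\<alpha>0 \<in> U" "Q \<alpha>0" "\<alpha>0 \<prec> N"
  shows "\<exists>\<alpha>\<in>U. \<alpha> \<prec> N \<and> Q \<alpha> \<and> (\<forall>\<alpha>'\<in>U. \<alpha> \<prec> \<alpha>' \<longrightarrow> \<alpha>' \<prec> N \<longrightarrow> \<not> Q \<alpha>')"
proof (rule ccontr)
  assume "\<not> ?thesis"
  then have nomax: "\<And>\<alpha>. \<alpha> \<in> U \<Longrightarrow> \<alpha> \<prec> N \<Longrightarrow> Q \<alpha> \<Longrightarrow> \<exists>\<alpha>'\<in>U. \<alpha> \<prec> \<alpha>' \<and> \<alpha>' \<prec> N \<and> Q \<alpha>'" by blast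
  have base: "sat S (\<zero> ## e) f" using sem[of "\<zero>"] q0 zero_le[OF q0(1)] by auto
  have step: "\<forall>t\<in>U. t \<prec> N \<longrightarrow> sat S (t ## e) f \<longrightarrow> sat S ((t \<oplus> \<one>) ## e) f"
  proof (intro ballI impI)
    fix t assume t: "t \<in> U" "t \<prec> N" "sat S (t ## e) f"
    then obtain \<alpha> where al: "\<alpha> \<in> U" "t \<prec> \<alpha> \<or> t = \<alpha>" "\<alpha> \<prec> N" "Q \<alpha>" using sem by blast
    show "sat S ((t \<oplus> \<one>) ## e) f"
    proof (cases "t = \<alpha>")
      case True
      then obtain \<alpha>' where al': "\<alpha>' \<in> U" "\<alpha> \<prec> \<alpha>'" "\<alpha>' \<prec> N" "Q \<alpha>'" using nomax al by blast
      have "t \<oplus> \<one> \<preceq> \<alpha>'" using lt_iff_succ_le[of t \<alpha>'] al' True t by simp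
      then show ?thesis using sem[of "t \<oplus> \<one>"] al' t by auto
    next
      case False
      then have "t \<oplus> \<one> \<preceq> \<alpha>" using lt_iff_succ_le[of t \<alpha>] al t by simp
      then show ?thesis using sem[of "t \<oplus> \<one>"] al t by auto
    qed
  qed
  have all: "\<forall>t\<in>U. t \<prec> N \<longrightarrow> sat S (t ## e) f"
    using MI sf e N(1) base step unfolding M_induction_def by blast
  have Npos: "\<zero> \<prec> N"
    using zero_le[OF q0(1)] q0 lt_trans[of "\<zero>" \<alpha>0 N] N by auto
  obtain m where m: "m \<in> U" "\<one> \<oplus> m = N" using le_ex[of "\<one>" N] pos_ge1[OF N(2) Npos] N by auto
  have mN: "m \<oplus> \<one> = N" using m ad_comm[of "\<one>" m] by simp
  have "m \<prec> N" using lt_ad1[of m] m mN by simp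
  then have "sat S (m ## e) f" using all m by blast
  then obtain \<alpha> where al: "\<alpha> \<in> U" "m \<prec> \<alpha> \<or> m = \<alpha>" "\<alpha> \<prec> N" "Q \<alpha>" using sem m by blast
  have "\<alpha> \<preceq> m" using lt_succ_iff[of \<alpha> m] al mN m by simp
  then have am: "\<alpha> = m" using al le_antisym m by blast
  obtain \<alpha>' where al': "\<alpha>' \<in> U" "\<alpha> \<prec> \<alpha>'" "\<alpha>' \<prec> N" "Q \<alpha>'" using nomax al by blast
  have "\<alpha>' \<preceq> m" using lt_succ_iff[of \<alpha>' m] al' mN m by simp
  then show False using al' am lt_asym[of m \<alpha>'] lt_irrefl[of m] m by auto
qed

end


lemma end_ext_facts:
  assumes "end_extension M K"
  shows "univ M \<subseteq> univ K" "zer M = zer K" "one M = one K"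
    "\<And>x y. x \<in> univ M \<Longrightarrow> y \<in> univ M \<Longrightarrow> pl M x y = pl K x y \<and> tm M x y = tm K x y \<and> (ls M x y \<longleftrightarrow> ls K x y)"
    "\<And>x y. x \<in> univ K \<Longrightarrow> x \<notin> univ M \<Longrightarrow> y \<in> univ M \<Longrightarrow> ls K y x"
  using assms unfolding end_extension_def by blast+

lemma env_mono: "env M e \<Longrightarrow> univ M \<subseteq> univ K \<Longrightarrow> env K e"
  by (auto simp: env_def)

theorem proposition5p8:
  fixes M K :: "'a struc" and n :: nat
  assumes "IDelta0_exp M"
    and "IDelta0_exp K"
    and "end_extension M K"
    and "univ K \<noteq> univ M"
    and "sigma_elementary (n + 2) M K"
    and "M_induction (n + 1) M K"
  shows "models_WR M (sigma_and_pi (n + 1))"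
proof -
  note ee = end_ext_facts[OF assms(3)]
  have IDM: "IDelta0 M" using assms(1) by (simp add: IDelta0_exp_def)
  have IDK: "IDelta0 K" using assms(2) by (simp add: IDelta0_exp_def)
  have paK: "PA_minus K" using IDK by (simp add: IDelta0_def)
  have paM: "PA_minus M" using IDM by (simp add: IDelta0_def)
  have zM: "zer M \<in> univ M" using paM by (simp add: PA_minus_def wf_struc_def)
  have UMne: "univ M \<noteq> {}" using zM by blast
  obtain EK where dEK: "delta0 EK" and exK: "\<And>e. env K e \<Longrightarrow>
        sat K (zer K ## one K ## e) EK \<and>
        (\<forall>x\<in>univ K. \<forall>y\<in>univ K. sat K (x ## y ## e) EK \<longrightarrow> sat K (pl K x (one K) ## pl K y y ## e) EK) \<and>
        (\<forall>x\<in>univ K. \<forall>y\<in>univ K. \<forall>y'\<in>univ K. sat K (x ## y ## e) EK \<and> sat K (x ## y' ## e) EK \<longrightarrow> y = y') \<and>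
        (\<forall>x\<in>univ K. \<exists>y\<in>univ K. sat K (x ## y ## e) EK)"
    using assms(2) unfolding IDelta0_exp_def exp_ax_def by blast
  interpret K: ari K EK
    by (unfold_locales) (use paK IDK dEK exK in auto)
  have elem: "\<And>g e'. sigma (Suc (Suc n)) g \<Longrightarrow> env M e' \<Longrightarrow> sat M e' g \<longleftrightarrow> sat K e' g"
    using assms(5) unfolding sigma_elementary_def by simp
  have MI: "M_induction (Suc n) M K" using assms(6) by simp
  obtain c where c: "c \<in> univ K" "c \<notin> univ M" using assms(4) ee(1) by blast
  have cM: "\<And>y. y \<in> univ M \<Longrightarrow> ls K y c" using ee(5) c by blast
  show ?thesis unfolding models_WR_def
  proof (intro conjI allI impI)
    show "IDelta0 M" by (rule IDM)
  next
    fix f assume "sigma_and_pi (n + 1) f"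
    then obtain \<sigma> \<pi> where f: "f = Conj \<sigma> \<pi>" and s\<sigma>: "sigma (Suc n) \<sigma>" and p\<pi>: "pi (Suc n) \<pi>"
      unfolding sigma_and_pi_def by auto
    obtain j p where \<pi>: "\<pi> = allB j p" and sp: "sigma n p" using pi_decomp[OF p\<pi>] by blast
    show "WR_holds M f" unfolding WR_holds_def
    proof (intro allI impI)
      fix e a assume eM: "env M e" and aM: "a \<in> univ M"
        and H: "\<forall>x\<in>univ M. \<exists>y\<in>univ M. ls M y a \<and> sat M (x ## y ## e) f"
      have eK: "env K e" using env_mono eM ee(1) by blast
      have aK: "a \<in> univ K" using aM ee(1) by blast
      have claim: "\<exists>y\<in>univ K. ls K y a \<and> sat K (c ## y ## e) \<sigma> \<and> sat K (c ## y ## e) \<pi>"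
      proof (rule ccontr)
        assume nc: "\<not> (\<exists>y\<in>univ K. ls K y a \<and> sat K (c ## y ## e) \<sigma> \<and> sat K (c ## y ## e) \<pi>)"
        define N where "N = K.P a"
        have NK: "N \<in> univ K" using aK by (simp add: N_def)
        have NM: "N \<in> univ M"
        proof -
          define g0 where "g0 = Ex (Ef EK (Var 1) (Var 0))"
          have sg0: "sigma (Suc (Suc n)) g0" unfolding g0_def
            by (intro sigma_pi.sEx sigma_pi.sS delta0_pi) (simp add: dEK)
          have de: "delta0 (Ef EK (Var 1) (Var 0))" using dEK by simp
          have "sat K (a ## e) g0" using K.sat_Ef K.expR_P[OF aK] K.P_U[OF aK] by (auto simp: g0_def)
          moreover have envae: "env M (a ## e)" using eM aM by (intro env_cons)
          ultimately have "sat M (a ## e) g0" using elem[OF sg0 envae] by simp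
          then obtain z where z: "z \<in> univ M" "sat M (z ## a ## e) (Ef EK (Var 1) (Var 0))" by (auto simp: g0_def)
          have envz: "env M (z ## a ## e)" using eM aM z by (intro env_cons)
          have "sat K (z ## a ## e) (Ef EK (Var 1) (Var 0))"
            using elem[OF delta0_sigma[OF de] envz] z by simp
          then have "K.expR a z" using K.sat_Ef by simp
          then have "z = N" using K.expR_eq aK z ee(1) by (auto simp: N_def)
          then show ?thesis using z by simp
        qed
        define Q where "Q \<alpha> = (\<exists>G\<in>univ K. sat K (G ## c ## \<alpha> ## a ## e) (Core EK j p))" for \<alpha>
        have envI: "env K (c ## a ## N ## e)" using eK c aK NK by (intro env_cons)
        have semI: "sat K (t ## c ## a ## N ## e) (If EK j p) \<longleftrightarrow>
            (\<exists>\<alpha>\<in>univ K. (ls K t \<alpha> \<or> t = \<alpha>) \<and> ls K \<alpha> N \<and> Q \<alpha>)" if "t \<in> univ K" for t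
          using sat_If[OF K.univ_ne] by (simp add: Q_def)
        have Q0: "Q (zer K)"
        proof -
          have z: "zer K \<in> univ K" by simp
          have "sat K (zer K ## c ## zer K ## a ## e) (Core EK j p)"
            using sat_Core[OF K.univ_ne] K.C1_K[OF z z aK] K.C2_K[OF z z aK] K.C3_K[OF z z aK] K.bit_0 K.idxv_U aK
            by simp
          then show ?thesis unfolding Q_def using z by blast
        qed
        obtain \<alpha> where al: "\<alpha> \<in> univ K" "ls K \<alpha> N" "Q \<alpha>"
          and mx: "\<forall>\<alpha>'\<in>univ K. ls K \<alpha> \<alpha>' \<longrightarrow> ls K \<alpha>' N \<longrightarrow> \<not> Q \<alpha>'"
          using K.max_principle[OF MI sigma_If[OF dEK sp] envI NM NK semI _ Q0] K.P_pos[OF aK]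
          by (auto simp: N_def)
        obtain G where G: "G \<in> univ K" "sat K (G ## c ## \<alpha> ## a ## e) (Core EK j p)" using al Q_def by blast
        have piK: "sat K (c ## y ## e) \<pi>" if y: "y \<in> univ K" "ls K y a" "\<not> K.bitS y \<alpha>" for y
        proof (rule ccontr)
          assume "\<not> sat K (c ## y ## e) \<pi>"
          then obtain us where us: "length us = j" "set us \<subseteq> univ K" "\<not> sat K (pre us (c ## y ## e)) p"
            unfolding \<pi> sat_allB by blast
          obtain \<alpha>' where "\<alpha>' \<in> univ K" "ls K \<alpha> \<alpha>'" "ls K \<alpha>' N" "Q \<alpha>'"
            using K.addA[OF eK c(1) aK al(1) G(1) _ G(2) y us] al(2) by (auto simp: N_def Q_def)
          then show False using mx by blast
        qed
        have T: "sat K (\<alpha> ## a ## e) (Theta EK j \<sigma> p)"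
        proof -
          have "sat K (G ## c ## \<alpha> ## a ## e) (T1f EK \<sigma>)"
            unfolding sat_T1[OF K.univ_ne]
          proof (intro ballI impI)
            fix y assume y: "y \<in> univ K" "ls K y a" "sat K (c ## y ## e) \<sigma>"
            then have "\<not> sat K (c ## y ## e) \<pi>" using nc by blast
            then have "K.bitS y \<alpha>" using piK y by blast
            then show "bitF K EK y \<alpha>" using K.bitF_eq y al by simp
          qed
          then have "sat K (G ## c ## \<alpha> ## a ## e) (ThC EK j \<sigma> p)"
            using G(2) sat_Core[OF K.univ_ne] sat_ThC[OF K.univ_ne] by simp
          then show ?thesis unfolding sat_Theta using c(1) G(1) by blast
        qed
        have alM: "\<alpha> \<in> univ M"
        proof (rule ccontr)
          assume "\<alpha> \<notin> univ M"
          then have "ls K N \<alpha>" using ee(5) al NM by blast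
          then show False using al K.lt_asym NK by blast
        qed
        have envT: "env M (\<alpha> ## a ## e)" using eM aM alM by (intro env_cons)
        have "sat M (\<alpha> ## a ## e) (Theta EK j \<sigma> p)"
          using elem[OF sigma_Theta[OF dEK s\<sigma> sp] envT] T by simp
        then obtain x0 G0 where xg: "x0 \<in> univ M" "G0 \<in> univ M" "sat M (G0 ## x0 ## \<alpha> ## a ## e) (ThC EK j \<sigma> p)"
          unfolding sat_Theta by blast
        have T1M: "sat M (G0 ## x0 ## \<alpha> ## a ## e) (T1f EK \<sigma>)"
          and C1M: "sat M (G0 ## x0 ## \<alpha> ## a ## e) (C1f EK j)"
          and C3M: "sat M (G0 ## x0 ## \<alpha> ## a ## e) (C3f EK j p)"
          using xg(3) sat_ThC[OF UMne] by simp_all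
        obtain y where y: "y \<in> univ M" "ls M y a" "sat M (x0 ## y ## e) \<sigma>" "sat M (x0 ## y ## e) \<pi>"
          using H xg(1) f by auto
        have b: "bitF M EK y \<alpha>" using T1M y unfolding sat_T1[OF UMne] by blast
        obtain us where us: "length us = j" "set us \<subseteq> univ M" "\<forall>u\<in>set us. ls M u G0" "EGs M EK j us y G0 a"
          using C1M y b unfolding sat_C1 by blast
        have "\<not> sat M (pre us (x0 ## y ## e)) p" using C3M y b us unfolding sat_C3[OF UMne] by blast
        moreover have "sat M (pre us (x0 ## y ## e)) p" using y(4) us unfolding \<pi> sat_allB by blast
        ultimately show False by simp
      qed
      then obtain y where y: "y \<in> univ K" "ls K y a" "sat K (c ## y ## e) \<sigma>" "sat K (c ## y ## e) \<pi>" by blast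
      have yM: "y \<in> univ M"
      proof (rule ccontr)
        assume "y \<notin> univ M"
        then have "ls K a y" using ee(5) y aM by blast
        then show False using y K.lt_asym aK by blast
      qed
      have yaM: "ls M y a" using ee(4)[OF yM aM] y by simp
      have "\<forall>b\<in>univ M. \<exists>x\<in>univ M. ls M b x \<and> sat M (x ## y ## e) f"
      proof
        fix b assume bM: "b \<in> univ M"
        have envb: "env M (b ## y ## e)" using eM bM yM by (intro env_cons)
        have "sat K (b ## y ## e) (Ff \<sigma> \<pi>)" using sat_Ff[OF K.univ_ne] cM[OF bM] y c by blast
        then have "sat M (b ## y ## e) (Ff \<sigma> \<pi>)" using elem[OF sigma_Ff[OF s\<sigma> p\<pi>] envb] by simp
        then show "\<exists>x\<in>univ M. ls M b x \<and> sat M (x ## y ## e) f" using sat_Ff[OF UMne] f by simp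
      qed
      then show "\<exists>y\<in>univ M. ls M y a \<and> (\<forall>b\<in>univ M. \<exists>x\<in>univ M. ls M b x \<and> sat M (x ## y ## e) f)"
        using yM yaM by blast
    qed
  qed
qed


end
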